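(* Let $\Gamma\subseteq A$ be $\Bbbk$-algebras, $\sim$ an equivalence relation on $\mathrm{cfs}(\Gamma)$, and suppose $\Gamma$ is a strong Harish-Chandra block subalgebra of $A$ with respect to $\sim$. Let $F$ be a profinite $\mathcal A$-module. Then for $a\in A$ and $v\in F(B)$, the element $F_{B,C}((a))v$ is nonzero for only finitely many $C$, and $\mathcal H(F):=\bigoplus_{B}F(B)$ with the action $a.v:=\sum_CF_{B,C}((a))v$ (for $v\in F(B)$) is a Harish-Chandra block module. Furthermore, if $F$ is a discrete $\mathcal A$-module, then $\mathcal H(F)$ is a strong Harish-Chandra block module.
   Context: $\mathrm{cfs}(\Gamma)$: maximal two-sided ideals $\mathfrak m$ with $\dim\Gamma/\mathfrak m<\infty$. For a class $B$, $\mathcal W(B)=\{\mathfrak m_1\cdots\mathfrak m_k:k\ge0,\mathfrak m_i\in B\}$. For a left $\Gamma$-module $V$, $V(B)=\{v:\mathfrak mv=0$ for some $\mathfrak m\in\mathcal W(B)\}$ (right modules analogously); block module: $V=\bigoplus_BV(B)$; strong block module: additionally each $V(B)$ is killed by some $\mathfrak m\in\mathcal W(B)$. A (strong) Harish-Chandra block module is an $A$-module that is a (strong) block module over $\Gamma$. $\Gamma$ is a strong Harish-Chandra block subalgebra if for all $B$, $\mathfrak m\in\mathcal W(B)$, the left module $A/A\mathfrak m$ and the right module $A/\mathfrak mA$ are strong block modules. $\mathcal A$ is the category with objects $\mathrm{cfs}(\Gamma)/{\sim}$, morphisms $\mathcal A(B,C)=\varprojlim_{\mathfrak n\in\mathcal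 W(C),\mathfrak m\in\mathcal W(B)}A/(\mathfrak nA+A\mathfrak m)$, and composition defined by: for $\mathfrak m\in\mathcal W(B)$, $\mathfrak l\in\mathcal W(D)$ choose $\mathfrak n\in\mathcal W(C)$ with $A/(\mathfrak lA+A\mathfrak n)\cong(A/\mathfrak lA)(C)$ and $A/(\mathfrak nA+A\mathfrak m)\cong(A/A\mathfrak m)(C)$ naturally; pick representatives $a_0$ of $\alpha_{\mathfrak m,\mathfrak n}$ with $a_0+A\mathfrak m\in(A/A\mathfrak m)(C)$ and $b_0$ of $\beta_{\mathfrak n,\mathfrak l}$ with $b_0+\mathfrak lA\in(A/\mathfrak lA)(C)$; set $(\beta\circ\alpha)_{\mathfrak m,\mathfrak l}=b_0a_0+\mathfrak lA+A\mathfrak m$. $(a)$ denotes the image of $a\in A$ in $\mathcal A(B,C)$. $\mathcal A(B,C)$ carries the inverse limit topology of the discrete quotients; $\mathrm{Hom}_\Bbbk(V,W)$ carries either the discrete topology or the limit topology $\varprojlim_U\mathrm{Hom}_\Bbbk(U,W)$ over finite-dimensional $U\le V$ (each factor discrete). A profinite (resp. discrete) $\mathcal A$-module is a functor $F:\mathcal A\to\mathbf{Vect}_\Bbbk$ with each $F_{B,C}$ a continuous linear map for the limit (resp. discrete) topology. *)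

theory Defs
  imports Complex_Main "HOL-Library.Function_Algebras"
begin

text \<open>
  The algebra A is the whole of a type
  'a::ring_1 together with a scalar multiplication sa making it a k-algebra.  The
  subalgebra Gamma is a subset G of 'a.
\<close>

definition kalg :: "('k::field \<Rightarrow> 'a::ring_1 \<Rightarrow> 'a) \<Rightarrow> bool" where
  "kalg sa \<longleftrightarrow> vector_space sa \<and>
     (\<forall>c x y. sa c (x * y) = sa c x * y \<and> sa c (x * y) = x * sa c y)"

definition subalg :: "('k::field \<Rightarrow> 'a::ring_1 \<Rightarrow> 'a) \<Rightarrow> 'a set \<Rightarrow> bool" where
  "subalg sa G \<longleftrightarrow> 1 \<in> G \<and> 0 \<in> G \<and> (\<forall>x\<in>G. \<forall>y\<in>G. x + y \<in> G \<and> x * y \<in> G)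
     \<and> (\<forall>c. \<forall>x\<in>G. sa c x \<in> G)"

definition tsideal :: "('k::field \<Rightarrow> 'a::ring_1 \<Rightarrow> 'a) \<Rightarrow> 'a set \<Rightarrow> 'a set \<Rightarrow> bool" where
  "tsideal sa G I \<longleftrightarrow> I \<subseteq> G \<and> 0 \<in> I \<and> (\<forall>x\<in>I. \<forall>y\<in>I. x + y \<in> I)
     \<and> (\<forall>c. \<forall>x\<in>I. sa c x \<in> I) \<and> (\<forall>g\<in>G. \<forall>x\<in>I. g * x \<in> I \<and> x * g \<in> I)"

text \<open>cfs(Gamma): maximal two-sided ideals of finite codimension (dim Gamma/m finite)\<close>
definition cfs :: "('k::field \<Rightarrow> 'a::ring_1 \<Rightarrow> 'a) \<Rightarrow> 'a set \<Rightarrow> 'a set set" where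
  "cfs sa G = {m. tsideal sa G m \<and> m \<noteq> G \<and>
     (\<forall>I. tsideal sa G I \<and> m \<subseteq> I \<and> I \<noteq> G \<longrightarrow> I = m) \<and>
     (\<exists>S. finite S \<and> S \<subseteq> G \<and> G \<subseteq> module.span sa (S \<union> m))}"

text \<open>the objects of the category: cfs(Gamma)/~\<close>
definition objs :: "('k::field \<Rightarrow> 'a::ring_1 \<Rightarrow> 'a) \<Rightarrow> 'a set \<Rightarrow> ('a set \<times> 'a set) set
     \<Rightarrow> 'a set set set" where
  "objs sa G R = cfs sa G // R"

definition iprod :: "('k::field \<Rightarrow> 'a::ring_1 \<Rightarrow> 'a) \<Rightarrow> 'a set \<Rightarrow> 'a set \<Rightarrow> 'a set" where
  "iprod sa I J = module.span sa {x * y | x y. x \<in> I \<and> y \<in> J}"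

text \<open>W(B) = {m_1 ... m_k : k >= 0, m_i in B}; the empty product is Gamma itself\<close>
inductive_set WB :: "('k::field \<Rightarrow> 'a::ring_1 \<Rightarrow> 'a) \<Rightarrow> 'a set \<Rightarrow> 'a set set \<Rightarrow> 'a set set"
  for sa G B where
  WB_one: "G \<in> WB sa G B"
| WB_mult: "m \<in> WB sa G B \<Longrightarrow> p \<in> B \<Longrightarrow> iprod sa m p \<in> WB sa G B"

definition lid :: "('k::field \<Rightarrow> 'a::ring_1 \<Rightarrow> 'a) \<Rightarrow> 'a set \<Rightarrow> 'a set" where
  "lid sa m = iprod sa UNIV m"
definition rid :: "('k::field \<Rightarrow> 'a::ring_1 \<Rightarrow> 'a) \<Rightarrow> 'a set \<Rightarrow> 'a set" where
  "rid sa n = iprod sa n UNIV"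

definition Jid :: "('k::field \<Rightarrow> 'a::ring_1 \<Rightarrow> 'a) \<Rightarrow> 'a set \<Rightarrow> 'a set \<Rightarrow> 'a set" where
  "Jid sa m n = {x + y | x y. x \<in> rid sa n \<and> y \<in> lid sa m}"

definition coset :: "'a::ab_group_add set \<Rightarrow> 'a \<Rightarrow> 'a set" where
  "coset J a = (\<lambda>x. a + x) ` J"

text \<open>Modules over Gamma are given by an action act on a carrier M modulo a submodule N
  (so the module is M/N; for N = {0} it is M itself).
  v + N lies in V(B) iff some m in W(B) kills it.\<close>
definition bpart :: "('k::field \<Rightarrow> 'a::ring_1 \<Rightarrow> 'a) \<Rightarrow> 'a set \<Rightarrow> 'a set set
     \<Rightarrow> ('a \<Rightarrow> 'm \<Rightarrow> 'm) \<Rightarrow> 'm set \<Rightarrow> 'm \<Rightarrow> bool" where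
  "bpart sa G B act N v \<longleftrightarrow> (\<exists>m\<in>WB sa G B. \<forall>x\<in>m. act x v \<in> N)"

text \<open>block module: V = direct sum of the V(B), B ranging over cfs(Gamma)/~\<close>
definition block_module :: "('k::field \<Rightarrow> 'a::ring_1 \<Rightarrow> 'a) \<Rightarrow> 'a set \<Rightarrow> ('a set \<times> 'a set) set
     \<Rightarrow> 'm::ab_group_add set \<Rightarrow> 'm set \<Rightarrow> ('a \<Rightarrow> 'm \<Rightarrow> 'm) \<Rightarrow> bool" where
  "block_module sa G R M N act \<longleftrightarrow>
     (\<forall>v\<in>M. \<exists>S f. finite S \<and> S \<subseteq> objs sa G R \<and>
        (\<forall>B\<in>S. f B \<in> M \<and> bpart sa G B act N (f B)) \<and> v - (\<Sum>B\<in>S. f B) \<in> N) \<and>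
     (\<forall>S f. finite S \<and> S \<subseteq> objs sa G R \<and>
        (\<forall>B\<in>S. f B \<in> M \<and> bpart sa G B act N (f B)) \<and> (\<Sum>B\<in>S. f B) \<in> N
        \<longrightarrow> (\<forall>B\<in>S. f B \<in> N))"

definition strong_block_module :: "('k::field \<Rightarrow> 'a::ring_1 \<Rightarrow> 'a) \<Rightarrow> 'a set
     \<Rightarrow> ('a set \<times> 'a set) set \<Rightarrow> 'm::ab_group_add set \<Rightarrow> 'm set \<Rightarrow> ('a \<Rightarrow> 'm \<Rightarrow> 'm) \<Rightarrow> bool" where
  "strong_block_module sa G R M N act \<longleftrightarrow> block_module sa G R M N act \<and>
     (\<forall>B\<in>objs sa G R. \<exists>m\<in>WB sa G B. \<forall>v\<in>M. bpart sa G B act N v \<longrightarrow> (\<forall>x\<in>m. act x v \<in> N))"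

text \<open>strong Harish-Chandra block subalgebra: A/Am (left) and A/mA (right) are strong
  block modules over Gamma\<close>
definition strong_HC_block_subalg :: "('k::field \<Rightarrow> 'a::ring_1 \<Rightarrow> 'a) \<Rightarrow> 'a set
     \<Rightarrow> ('a set \<times> 'a set) set \<Rightarrow> bool" where
  "strong_HC_block_subalg sa G R \<longleftrightarrow> (\<forall>B\<in>objs sa G R. \<forall>m\<in>WB sa G B.
     strong_block_module sa G R UNIV (lid sa m) (\<lambda>x v. x * v) \<and>
     strong_block_module sa G R UNIV (rid sa m) (\<lambda>x v. v * x))"

text \<open>Morphisms of the category calA: elements of the inverse limit
  lim_{n in W(C), m in W(B)} A/(nA + Am), represented as compatible families of cosets
  alpha m n (a coset of nA + Am), with the value {} outside the index set.\<close>
type_synonym 'a hom = "'a set \<Rightarrow> 'a set \<Rightarrow> 'a set"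

definition homset :: "('k::field \<Rightarrow> 'a::ring_1 \<Rightarrow> 'a) \<Rightarrow> 'a set \<Rightarrow> 'a set set \<Rightarrow> 'a set set
     \<Rightarrow> 'a hom set" where
  "homset sa G B C = {\<alpha>.
     (\<forall>m n. m \<in> WB sa G B \<and> n \<in> WB sa G C \<longrightarrow> (\<exists>a. \<alpha> m n = coset (Jid sa m n) a)) \<and>
     (\<forall>m n. \<not> (m \<in> WB sa G B \<and> n \<in> WB sa G C) \<longrightarrow> \<alpha> m n = {}) \<and>
     (\<forall>m m' n n'. m \<in> WB sa G B \<and> m' \<in> WB sa G B \<and> n \<in> WB sa G C \<and> n' \<in> WB sa G C
        \<and> m \<subseteq> m' \<and> n \<subseteq> n' \<longrightarrow> \<alpha> m n \<subseteq> \<alpha> m' n')}"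

definition hom_of :: "('k::field \<Rightarrow> 'a::ring_1 \<Rightarrow> 'a) \<Rightarrow> 'a set \<Rightarrow> 'a \<Rightarrow> 'a set set \<Rightarrow> 'a set set
     \<Rightarrow> 'a hom" where
  "hom_of sa G a B C = (\<lambda>m n. if m \<in> WB sa G B \<and> n \<in> WB sa G C then coset (Jid sa m n) a else {})"

definition hom_add :: "'a::ring_1 hom \<Rightarrow> 'a hom \<Rightarrow> 'a hom" where
  "hom_add \<alpha> \<beta> = (\<lambda>m n. {x + y | x y. x \<in> \<alpha> m n \<and> y \<in> \<beta> m n})"

definition hom_scale :: "('k::field \<Rightarrow> 'a::ring_1 \<Rightarrow> 'a) \<Rightarrow> 'k \<Rightarrow> 'a hom \<Rightarrow> 'a hom" where
  "hom_scale sa c \<alpha> = (\<lambda>m n. if \<alpha> m n = {} then {}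
      else coset (Jid sa m n) (sa c (SOME x. x \<in> \<alpha> m n)))"

text \<open>Composition in calA, exactly as in the paper: for m in W(B), l in W(D), choose n in W(C)
  such that the natural maps (A/lA)(C) -> A/(lA+An) and (A/Am)(C) -> A/(nA+Am) are
  isomorphisms, representatives a0 of alpha_{m,n} with a0 + Am in (A/Am)(C) and b0 of
  beta_{n,l} with b0 + lA in (A/lA)(C), and put (beta o alpha)_{m,l} = b0 a0 + lA + Am.\<close>
definition comp_ok :: "('k::field \<Rightarrow> 'a::ring_1 \<Rightarrow> 'a) \<Rightarrow> 'a set \<Rightarrow> 'a set set
     \<Rightarrow> 'a hom \<Rightarrow> 'a hom \<Rightarrow> 'a set \<Rightarrow> 'a set \<Rightarrow> 'a set \<times> 'a \<times> 'a \<Rightarrow> bool" where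
  "comp_ok sa G C \<beta> \<alpha> m l = (\<lambda>(n, a0, b0). n \<in> WB sa G C \<and>
     (\<forall>a. \<exists>a'. bpart sa G C (\<lambda>x v. v * x) (rid sa l) a' \<and> a - a' \<in> Jid sa n l) \<and>
     (\<forall>a'. bpart sa G C (\<lambda>x v. v * x) (rid sa l) a' \<and> a' \<in> Jid sa n l \<longrightarrow> a' \<in> rid sa l) \<and>
     (\<forall>a. \<exists>a'. bpart sa G C (\<lambda>x v. x * v) (lid sa m) a' \<and> a - a' \<in> Jid sa m n) \<and>
     (\<forall>a'. bpart sa G C (\<lambda>x v. x * v) (lid sa m) a' \<and> a' \<in> Jid sa m n \<longrightarrow> a' \<in> lid sa m) \<and>
     a0 \<in> \<alpha> m n \<and> bpart sa G C (\<lambda>x v. x * v) (lid sa m) a0 \<and>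
     b0 \<in> \<beta> n l \<and> bpart sa G C (\<lambda>x v. v * x) (rid sa l) b0)"

definition hom_comp :: "('k::field \<Rightarrow> 'a::ring_1 \<Rightarrow> 'a) \<Rightarrow> 'a set \<Rightarrow> 'a set set \<Rightarrow> 'a set set
     \<Rightarrow> 'a set set \<Rightarrow> 'a hom \<Rightarrow> 'a hom \<Rightarrow> 'a hom" where
  "hom_comp sa G B C D \<beta> \<alpha> = (\<lambda>m l. if m \<in> WB sa G B \<and> l \<in> WB sa G D then
      (case SOME t. comp_ok sa G C \<beta> \<alpha> m l t of (n, a0, b0) \<Rightarrow> coset (Jid sa m l) (b0 * a0))
      else {})"

text \<open>A functor F : calA -> Vect_k with each F_{B,C} k-linear.  F(B) is a subspace Fo B of a
  k-vector space 'v, and F_{B,C} alpha is Fm B C alpha (relevant on Fo B only).\<close>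
definition is_Amodule :: "('k::field \<Rightarrow> 'a::ring_1 \<Rightarrow> 'a) \<Rightarrow> 'a set \<Rightarrow> ('a set \<times> 'a set) set
     \<Rightarrow> ('k \<Rightarrow> 'v::ab_group_add \<Rightarrow> 'v) \<Rightarrow> ('a set set \<Rightarrow> 'v set)
     \<Rightarrow> ('a set set \<Rightarrow> 'a set set \<Rightarrow> 'a hom \<Rightarrow> 'v \<Rightarrow> 'v) \<Rightarrow> bool" where
  "is_Amodule sa G R sv Fo Fm \<longleftrightarrow>
     (\<forall>B\<in>objs sa G R. module.subspace sv (Fo B)) \<and>
     (\<forall>B\<in>objs sa G R. \<forall>C\<in>objs sa G R. \<forall>\<alpha>\<in>homset sa G B C.
        (\<forall>v\<in>Fo B. Fm B C \<alpha> v \<in> Fo C) \<and>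
        (\<forall>v\<in>Fo B. \<forall>w\<in>Fo B. Fm B C \<alpha> (v + w) = Fm B C \<alpha> v + Fm B C \<alpha> w) \<and>
        (\<forall>c. \<forall>v\<in>Fo B. Fm B C \<alpha> (sv c v) = sv c (Fm B C \<alpha> v))) \<and>
     (\<forall>B\<in>objs sa G R. \<forall>C\<in>objs sa G R. \<forall>\<alpha>\<in>homset sa G B C. \<forall>\<beta>\<in>homset sa G B C.
        \<forall>v\<in>Fo B. Fm B C (hom_add \<alpha> \<beta>) v = Fm B C \<alpha> v + Fm B C \<beta> v) \<and>
     (\<forall>B\<in>objs sa G R. \<forall>C\<in>objs sa G R. \<forall>\<alpha>\<in>homset sa G B C. \<forall>c.
        \<forall>v\<in>Fo B. Fm B C (hom_scale sa c \<alpha>) v = sv c (Fm B C \<alpha> v)) \<and>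
     (\<forall>B\<in>objs sa G R. \<forall>v\<in>Fo B. Fm B B (hom_of sa G 1 B B) v = v) \<and>
     (\<forall>B\<in>objs sa G R. \<forall>C\<in>objs sa G R. \<forall>D\<in>objs sa G R.
        \<forall>\<alpha>\<in>homset sa G B C. \<forall>\<beta>\<in>homset sa G C D. \<forall>v\<in>Fo B.
        Fm B D (hom_comp sa G B C D \<beta> \<alpha>) v = Fm C D \<beta> (Fm B C \<alpha> v))"

text \<open>profinite: each F_{B,C} continuous from the inverse limit topology on calA(B,C) to the
  limit topology on Hom(F(B),F(C)) (basic neighbourhoods: agreement on a finite-dimensional
  subspace span S, S finite).\<close>
definition profinite_Amodule where
  "profinite_Amodule sa G R sv Fo Fm \<longleftrightarrow> is_Amodule sa G R sv Fo Fm \<and>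
     (\<forall>B\<in>objs sa G R. \<forall>C\<in>objs sa G R. \<forall>\<alpha>\<in>homset sa G B C. \<forall>S.
        finite S \<and> S \<subseteq> Fo B \<longrightarrow>
        (\<exists>I. finite I \<and> I \<subseteq> WB sa G B \<times> WB sa G C \<and>
           (\<forall>\<beta>\<in>homset sa G B C. (\<forall>(m, n)\<in>I. \<beta> m n = \<alpha> m n) \<longrightarrow>
              (\<forall>v\<in>module.span sv S. Fm B C \<beta> v = Fm B C \<alpha> v))))"

text \<open>discrete: each F_{B,C} continuous for the discrete topology on Hom(F(B),F(C)).\<close>
definition discrete_Amodule where
  "discrete_Amodule sa G R sv Fo Fm \<longleftrightarrow> is_Amodule sa G R sv Fo Fm \<and>
     (\<forall>B\<in>objs sa G R. \<forall>C\<in>objs sa G R. \<forall>\<alpha>\<in>homset sa G B C.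
        (\<exists>I. finite I \<and> I \<subseteq> WB sa G B \<times> WB sa G C \<and>
           (\<forall>\<beta>\<in>homset sa G B C. (\<forall>(m, n)\<in>I. \<beta> m n = \<alpha> m n) \<longrightarrow>
              (\<forall>v\<in>Fo B. Fm B C \<beta> v = Fm B C \<alpha> v))))"

definition HF :: "('k::field \<Rightarrow> 'a::ring_1 \<Rightarrow> 'a) \<Rightarrow> 'a set \<Rightarrow> ('a set \<times> 'a set) set
     \<Rightarrow> ('a set set \<Rightarrow> 'v::ab_group_add set) \<Rightarrow> ('a set set \<Rightarrow> 'v) set" where
  "HF sa G R Fo = {h. finite {B. h B \<noteq> 0} \<and>
     (\<forall>B. if B \<in> objs sa G R then h B \<in> Fo B else h B = 0)}"

definition Hact :: "('k::field \<Rightarrow> 'a::ring_1 \<Rightarrow> 'a) \<Rightarrow> 'a set \<Rightarrow> ('a set \<times> 'a set) set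
     \<Rightarrow> ('a set set \<Rightarrow> 'a set set \<Rightarrow> 'a hom \<Rightarrow> 'v::ab_group_add \<Rightarrow> 'v)
     \<Rightarrow> 'a \<Rightarrow> ('a set set \<Rightarrow> 'v) \<Rightarrow> ('a set set \<Rightarrow> 'v)" where
  "Hact sa G R Fm a h = (\<lambda>C. if C \<in> objs sa G R then
      (\<Sum>B\<in>{B. h B \<noteq> 0}. Fm B C (hom_of sa G a B C) (h B)) else 0)"

definition is_left_module :: "('k::field \<Rightarrow> 'a::ring_1 \<Rightarrow> 'a) \<Rightarrow> ('k \<Rightarrow> 'm::ab_group_add \<Rightarrow> 'm)
     \<Rightarrow> 'm set \<Rightarrow> ('a \<Rightarrow> 'm \<Rightarrow> 'm) \<Rightarrow> bool" where
  "is_left_module sa sm M act \<longleftrightarrow> module.subspace sm M \<and>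
     (\<forall>a. \<forall>v\<in>M. act a v \<in> M) \<and> (\<forall>v\<in>M. act 1 v = v) \<and>
     (\<forall>a b. \<forall>v\<in>M. act (a * b) v = act a (act b v)) \<and>
     (\<forall>a b. \<forall>v\<in>M. act (a + b) v = act a v + act b v) \<and>
     (\<forall>a. \<forall>v\<in>M. \<forall>w\<in>M. act a (v + w) = act a v + act a w) \<and>
     (\<forall>c a. \<forall>v\<in>M. act (sa c a) v = sm c (act a v) \<and> act a (sm c v) = sm c (act a v))"

end

theory Submission
  imports Defs
begin

lemma coset_mem: "x \<in> coset J a \<longleftrightarrow> x - a \<in> J" for J :: "'a::ab_group_add set"
  unfolding coset_def image_iff by (metis add_diff_cancel_left' diff_add_cancel add.commute)

definition comax :: "'a::ring_1 set \<Rightarrow> 'a set \<Rightarrow> bool" where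
  "comax I J \<longleftrightarrow> (\<exists>u\<in>I. \<exists>w\<in>J. u + w = 1)"

lemma comax_sym: "comax I J \<Longrightarrow> comax J I"
  unfolding comax_def by (metis add.commute)

locale hcb =
  fixes sa :: "'k::field \<Rightarrow> 'a::ring_1 \<Rightarrow> 'a" and G :: "'a set" and R :: "('a set \<times> 'a set) set"
  assumes kalg: "kalg sa" and sub: "subalg sa G" and eqv: "equiv (cfs sa G) R"
    and shc: "strong_HC_block_subalg sa G R"
begin

sublocale V: vector_space sa using kalg unfolding kalg_def by auto

lemma sa_mult1: "sa c (x*y) = sa c x * y"
  using kalg unfolding kalg_def by blast
lemma sa_mult2: "sa c (x*y) = x * sa c y"
  using kalg unfolding kalg_def by blast

lemma G1: "1 \<in> G" and G0: "0 \<in> G" and Gadd: "x\<in>G \<Longrightarrow> y\<in>G \<Longrightarrow> x+y \<in> G"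
  and Gmult: "x\<in>G \<Longrightarrow> y\<in>G \<Longrightarrow> x*y \<in> G" and Gsa: "x \<in> G \<Longrightarrow> sa c x \<in> G"
  using sub unfolding subalg_def by auto

lemma G_sub: "V.subspace G"
  unfolding V.subspace_def using G0 Gadd Gsa by auto

lemma span_map:
  assumes "z \<in> V.span X" "V.subspace T" "\<And>s. s\<in>X \<Longrightarrow> f s \<in> T"
    "f 0 = 0" "\<And>x y. f (x+y) = f x + f y" "\<And>c x. f (sa c x) = sa c (f x)"
  shows "f z \<in> T"
proof -
  have "V.subspace {z. f z \<in> T}"
    using assms(2,4,5,6) unfolding V.subspace_def by auto
  then show ?thesis using V.span_induct[OF assms(1), of "\<lambda>z. f z \<in> T"] assms(3) by auto
qed

lemma ts_sub: "tsideal sa G I \<Longrightarrow> V.subspace I"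
  unfolding tsideal_def V.subspace_def by auto
lemma ts_G: "tsideal sa G I \<Longrightarrow> I \<subseteq> G"
  unfolding tsideal_def by auto
lemma ts_left: "tsideal sa G I \<Longrightarrow> g \<in> G \<Longrightarrow> x \<in> I \<Longrightarrow> g * x \<in> I"
  and ts_right: "tsideal sa G I \<Longrightarrow> g \<in> G \<Longrightarrow> x \<in> I \<Longrightarrow> x * g \<in> I"
  unfolding tsideal_def by auto
lemma ts_0: "tsideal sa G I \<Longrightarrow> 0 \<in> I"
  unfolding tsideal_def by auto

lemma G_ts: "tsideal sa G G"
  unfolding tsideal_def using G0 Gadd Gsa Gmult by auto

lemma iprod_sub1: "tsideal sa G I \<Longrightarrow> tsideal sa G J \<Longrightarrow> iprod sa I J \<subseteq> I"
  unfolding iprod_def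
  by (rule V.span_minimal) (auto intro: ts_right ts_sub dest: ts_G)
lemma iprod_sub2: "tsideal sa G I \<Longrightarrow> tsideal sa G J \<Longrightarrow> iprod sa I J \<subseteq> J"
  unfolding iprod_def
  by (rule V.span_minimal) (auto intro: ts_left ts_sub dest: ts_G)

lemma iprod_ts:
  assumes I: "tsideal sa G I" and J: "tsideal sa G J"
  shows "tsideal sa G (iprod sa I J)"
proof -
  have sub: "iprod sa I J \<subseteq> G" using iprod_sub1[OF I J] ts_G[OF I] by auto
  have l: "g * z \<in> iprod sa I J" if "g \<in> G" "z \<in> iprod sa I J" for g z
    using that(2) unfolding iprod_def
    apply (rule span_map[where f="\<lambda>z. g * z"])
    using that(1) ts_left[OF I that(1)]
    by (auto simp: mult.assoc[symmetric] distrib_left sa_mult2[symmetric] intro!: V.span_base) blast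
  have r: "z * g \<in> iprod sa I J" if "g \<in> G" "z \<in> iprod sa I J" for g z
    using that(2) unfolding iprod_def
    apply (rule span_map[where f="\<lambda>z. z * g"])
    using that(1) ts_right[OF J that(1)]
    by (auto simp: mult.assoc distrib_right sa_mult1[symmetric] intro!: V.span_base) blast
  show ?thesis unfolding tsideal_def using sub l r
    by (auto simp: iprod_def V.span_zero V.span_add V.span_scale)
qed

lemma objs_sub: "B \<in> objs sa G R \<Longrightarrow> B \<subseteq> cfs sa G"
  unfolding objs_def using eqv in_quotient_imp_subset by blast

lemma cfs_ts: "p \<in> cfs sa G \<Longrightarrow> tsideal sa G p"
  unfolding cfs_def by auto

lemma W_ts: "m \<in> WB sa G B \<Longrightarrow> B \<in> objs sa G R \<Longrightarrow> tsideal sa G m"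
  by (induction m rule: WB.induct) (auto intro: G_ts iprod_ts cfs_ts dest: objs_sub)

lemma W_lb: assumes m1: "m1 \<in> WB sa G B" and m2: "m2 \<in> WB sa G B" and B: "B \<in> objs sa G R"
  shows "\<exists>m\<in>WB sa G B. m \<subseteq> m1 \<and> m \<subseteq> m2"
  using m2
proof (induction m2 rule: WB.induct)
  case WB_one
  then show ?case using W_ts ts_G m1 B by blast
next
  case (WB_mult m2 p)
  then obtain m where m: "m \<in> WB sa G B" "m \<subseteq> m1" "m \<subseteq> m2" by auto
  have "iprod sa m p \<in> WB sa G B" using m WB_mult by (auto intro: WB.WB_mult)
  moreover have "iprod sa m p \<subseteq> m"
    using iprod_sub1 W_ts[OF m(1) B] WB_mult objs_sub[OF B] cfs_ts by blast
  moreover have "iprod sa m p \<subseteq> iprod sa m2 p"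
    unfolding iprod_def using m by (intro V.span_mono) blast
  ultimately show ?case using m by blast
qed

lemma W_lb_fin: "finite X \<Longrightarrow> X \<subseteq> WB sa G B \<Longrightarrow> B \<in> objs sa G R \<Longrightarrow>
    \<exists>m\<in>WB sa G B. \<forall>x\<in>X. m \<subseteq> x"
proof (induction X rule: finite_induct)
  case empty
  then show ?case by (auto intro: WB.WB_one)
next
  case (insert x F)
  then obtain m where "m \<in> WB sa G B" "\<forall>y\<in>F. m \<subseteq> y" by auto
  with W_lb[of m B x] insert show ?case by (metis dual_order.trans insert_iff insert_subset)
qed

lemma cfs_comax:
  assumes p: "p \<in> cfs sa G" and q: "q \<in> cfs sa G" and ne: "p \<noteq> q"
  shows "comax p q"
proof -
  have tp: "tsideal sa G p" and tq: "tsideal sa G q" using p q cfs_ts by auto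
  define I where "I = {u + w | u w. u \<in> p \<and> w \<in> q}"
  have tI: "tsideal sa G I"
  proof -
    have "I \<subseteq> G" unfolding I_def using tp tq ts_G Gadd by blast
    moreover have "0 \<in> I" unfolding I_def using ts_0[OF tp] ts_0[OF tq] by force
    moreover have "x + y \<in> I" if hx: "x \<in> I" and hy: "y \<in> I" for x y
    proof -
      obtain u w where "x = u + w" "u\<in>p" "w\<in>q"
        using hx unfolding I_def by blast
      moreover obtain u' w' where "y = u' + w'" "u'\<in>p" "w'\<in>q"
        using hy unfolding I_def by blast
      moreover have "u + u' \<in> p" "w + w' \<in> q" using calculation tp tq unfolding tsideal_def by auto
      moreover have "x + y = (u+u') + (w+w')" using calculation by (simp add: algebra_simps)
      ultimately show ?thesis unfolding I_def by blast
    qed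
    moreover have "sa c x \<in> I" if hx: "x \<in> I" for x c
    proof -
      obtain u w where "x = u + w" "u\<in>p" "w\<in>q" using hx unfolding I_def by blast
      moreover have "sa c u \<in> p" "sa c w \<in> q" using calculation tp tq unfolding tsideal_def by auto
      ultimately show ?thesis unfolding I_def by (auto simp: V.scale_right_distrib)
    qed
    moreover have "g * x \<in> I \<and> x * g \<in> I" if hg: "g \<in> G" and hx: "x \<in> I" for x g
    proof -
      obtain u w where "x = u + w" "u\<in>p" "w\<in>q" using hx unfolding I_def by blast
      moreover have "g*u \<in> p" "g * w \<in> q" "u*g \<in> p" "w*g \<in> q"
        using calculation tp tq hg ts_left ts_right by auto
      ultimately show ?thesis unfolding I_def by (auto simp: algebra_simps)
    qed
    ultimately show ?thesis unfolding tsideal_def by blast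
  qed
  have pI: "p \<subseteq> I" unfolding I_def using ts_0[OF tq] by force
  have qI: "q \<subseteq> I" unfolding I_def using ts_0[OF tp] by force
  have "I = G"
  proof (rule ccontr)
    assume "I \<noteq> G"
    then have "I = p" using p tI pI unfolding cfs_def by blast
    then have "q \<subseteq> p" using qI by auto
    moreover have "p \<noteq> G" using p unfolding cfs_def by auto
    ultimately have "p = q" using q tp unfolding cfs_def by blast
    then show False using ne by simp
  qed
  then have "1 \<in> I" using G1 by simp
  then show ?thesis unfolding I_def comax_def by auto
qed

lemma comax_prod:
  assumes I: "tsideal sa G I" and J: "tsideal sa G J" and J': "tsideal sa G J'"
    and c1: "comax I J" and c2: "comax I J'"
  shows "comax I (iprod sa J J')"
proof -
  obtain u w where uw: "u \<in> I" "w \<in> J" "u + w = 1" using c1 unfolding comax_def by auto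
  obtain u' w' where uw': "u' \<in> I" "w' \<in> J'" "u' + w' = 1" using c2 unfolding comax_def by auto
  have "1 = (u + w) * (u' + w')" using uw uw' by simp
  also have "\<dots> = (u*u' + u*w' + w*u') + w*w'" by (simp add: algebra_simps)
  finally have eq: "(u*u' + u*w' + w*u') + w*w' = 1" by simp
  have "u*u' \<in> I" using ts_right[OF I _ uw(1)] uw' ts_G[OF I] by auto
  moreover have "u*w' \<in> I" using ts_right[OF I _ uw(1)] uw' ts_G[OF J'] by auto
  moreover have "w*u' \<in> I" using ts_left[OF I _ uw'(1)] uw ts_G[OF J] by auto
  ultimately have "u*u' + u*w' + w*u' \<in> I" using I unfolding tsideal_def by auto
  moreover have "w*w' \<in> iprod sa J J'" unfolding iprod_def using uw uw' by (auto intro!: V.span_base)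
  ultimately show ?thesis unfolding comax_def using eq by blast
qed

lemma W_comax:
  assumes B: "B \<in> objs sa G R" and C: "C \<in> objs sa G R" and ne: "B \<noteq> C"
    and m: "m \<in> WB sa G B" and n: "n \<in> WB sa G C"
  shows "comax m n"
proof -
  have disj: "B \<inter> C = {}" using quotient_disj[OF eqv, of B C] B C ne unfolding objs_def by auto
  have step1: "comax p n" if p: "p \<in> B" for p
    using n
  proof (induction n rule: WB.induct)
    case WB_one
    have "0 \<in> p" using ts_0 cfs_ts objs_sub B p by blast
    then show ?case unfolding comax_def using G1 by (intro bexI[of _ 0] bexI[of _ 1]) auto
  next
    case (WB_mult n q)
    have "p \<noteq> q" using disj p WB_mult by auto
    then have "comax p q" using cfs_comax objs_sub B C p WB_mult by blast
    have tp: "tsideal sa G p" using cfs_ts objs_sub B p by blast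
    have tn: "tsideal sa G n" using W_ts WB_mult(1) C by blast
    have tq: "tsideal sa G q" using cfs_ts objs_sub C WB_mult(2) by blast
    show ?case using comax_prod[OF tp tn tq] WB_mult(3) \<open>comax p q\<close> by blast
  qed
  show ?thesis using m
  proof (induction m rule: WB.induct)
    case WB_one
    have "0 \<in> n" using ts_0 W_ts n C by blast
    then show ?case unfolding comax_def using G1 by (intro bexI[of _ 1] bexI[of _ 0]) auto
  next
    case (WB_mult m p)
    have tn: "tsideal sa G n" using W_ts n C by blast
    have tm: "tsideal sa G m" using W_ts WB_mult(1) B by blast
    have tp: "tsideal sa G p" using cfs_ts objs_sub B WB_mult(2) by blast
    have "comax n m" using WB_mult(3) comax_sym by blast
    moreover have "comax n p" using step1[OF WB_mult(2)] comax_sym by blast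
    ultimately have "comax n (iprod sa m p)" using comax_prod[OF tn tm tp] by blast
    then show ?case using comax_sym by blast
  qed
qed

end

context hcb begin

lemma Jid_span: "Jid sa m n = V.span ({x * y | x y. x \<in> n \<and> y \<in> UNIV} \<union> {x * y | x y. x \<in> UNIV \<and> y \<in> m})"
  unfolding Jid_def rid_def lid_def iprod_def V.span_Un by simp

lemma Jid_sub: "V.subspace (Jid sa m n)"
  unfolding Jid_span by simp

lemma lid_J: "lid sa m \<subseteq> Jid sa m n"
  unfolding Jid_span lid_def iprod_def by (intro V.span_mono) blast
lemma rid_J: "rid sa n \<subseteq> Jid sa m n"
  unfolding Jid_span rid_def iprod_def by (intro V.span_mono) blast

lemma Jid_mono: "m \<subseteq> m' \<Longrightarrow> n \<subseteq> n' \<Longrightarrow> Jid sa m n \<subseteq> Jid sa m' n'"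
  unfolding Jid_span by (intro V.span_mono) blast

lemma coset_eq_iff: "V.subspace J \<Longrightarrow> coset J a = coset J b \<longleftrightarrow> a - b \<in> J"
proof
  assume J: "V.subspace J" and eq: "coset J a = coset J b"
  have "a \<in> coset J a" using V.subspace_0[OF J] by (simp add: coset_mem)
  then show "a - b \<in> J" using eq by (simp add: coset_mem)
next
  assume J: "V.subspace J" and d: "a - b \<in> J"
  show "coset J a = coset J b"
  proof (rule set_eqI)
    fix x
    have "x - b = (x - a) + (a - b)" "x - a = (x - b) - (a - b)" by simp_all
    then show "x \<in> coset J a \<longleftrightarrow> x \<in> coset J b"
      using V.subspace_add[OF J] V.subspace_diff[OF J] d by (metis coset_mem)
  qed
qed

lemma coset_self: "V.subspace J \<Longrightarrow> a \<in> coset J a"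
  using V.subspace_0 by (simp add: coset_mem)

lemma coset_sub: "J \<subseteq> J' \<Longrightarrow> coset J a \<subseteq> coset J' a"
  by (auto simp: coset_mem)

lemma hom_of_W: "m \<in> WB sa G B \<Longrightarrow> n \<in> WB sa G C \<Longrightarrow> hom_of sa G a B C m n = coset (Jid sa m n) a"
  unfolding hom_of_def by simp

lemma hom_of_notW: "\<not> (m \<in> WB sa G B \<and> n \<in> WB sa G C) \<Longrightarrow> hom_of sa G a B C m n = {}"
  unfolding hom_of_def by auto

lemma hom_of_homset: "hom_of sa G a B C \<in> homset sa G B C"
  unfolding homset_def
proof (intro CollectI conjI allI impI)
  fix m n assume "m \<in> WB sa G B \<and> n \<in> WB sa G C"
  then show "\<exists>a'. hom_of sa G a B C m n = coset (Jid sa m n) a'" using hom_of_W by blast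
next
  fix m n assume "\<not> (m \<in> WB sa G B \<and> n \<in> WB sa G C)"
  then show "hom_of sa G a B C m n = {}" by (rule hom_of_notW)
next
  fix m m' n n' assume h: "m \<in> WB sa G B \<and> m' \<in> WB sa G B \<and> n \<in> WB sa G C \<and> n' \<in> WB sa G C
        \<and> m \<subseteq> m' \<and> n \<subseteq> n'"
  then show "hom_of sa G a B C m n \<subseteq> hom_of sa G a B C m' n'"
    using hom_of_W coset_sub[OF Jid_mono] by metis
qed

lemma hom_add_of: "hom_add (hom_of sa G a B C) (hom_of sa G b B C) = hom_of sa G (a + b) B C"
proof (intro ext)
  fix m n
  show "hom_add (hom_of sa G a B C) (hom_of sa G b B C) m n = hom_of sa G (a + b) B C m n"
  proof (cases "m \<in> WB sa G B \<and> n \<in> WB sa G C")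
    case True
    let ?J = "Jid sa m n"
    have J: "V.subspace ?J" by (rule Jid_sub)
    have "{x + y |x y. x \<in> coset ?J a \<and> y \<in> coset ?J b} = coset ?J (a + b)"
    proof (intro set_eqI iffI)
      fix z assume "z \<in> {x + y |x y. x \<in> coset ?J a \<and> y \<in> coset ?J b}"
      then obtain x y where "z = x + y" "x - a \<in> ?J" "y - b \<in> ?J" by (auto simp: coset_mem)
      moreover have e: "z - (a + b) = (x - a) + (y - b)" using calculation by (simp add: algebra_simps)
      ultimately have "z - (a + b) \<in> ?J" unfolding e using V.subspace_add[OF J] by blast
      then show "z \<in> coset ?J (a + b)" by (simp add: coset_mem)
    next
      fix z assume "z \<in> coset ?J (a + b)"
      then have "(z - b) - a \<in> ?J" "b - b \<in> ?J" using V.subspace_0[OF J] by (simp_all add: coset_mem algebra_simps)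
      then have "z - b \<in> coset ?J a" "b \<in> coset ?J b" by (simp_all add: coset_mem)
      moreover have "z = (z - b) + b" by simp
      ultimately show "z \<in> {x + y |x y. x \<in> coset ?J a \<and> y \<in> coset ?J b}" by blast
    qed
    then show ?thesis using True unfolding hom_add_def hom_of_def by simp
  next
    case False
    then show ?thesis unfolding hom_add_def by (simp add: hom_of_notW[OF False])
  qed
qed

lemma hom_scale_of: "hom_scale sa c (hom_of sa G a B C) = hom_of sa G (sa c a) B C"
proof (intro ext)
  fix m n
  show "hom_scale sa c (hom_of sa G a B C) m n = hom_of sa G (sa c a) B C m n"
  proof (cases "m \<in> WB sa G B \<and> n \<in> WB sa G C")
    case True
    let ?J = "Jid sa m n"
    have J: "V.subspace ?J" by (rule Jid_sub)
    have ne: "coset ?J a \<noteq> {}" using coset_self[OF J] by auto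
    have "(SOME x. x \<in> coset ?J a) \<in> coset ?J a" using coset_self[OF J] by (rule someI)
    then have "(SOME x. x \<in> coset ?J a) - a \<in> ?J" by (simp add: coset_mem)
    then have "sa c ((SOME x. x \<in> coset ?J a) - a) \<in> ?J" using V.subspace_scale[OF J] by blast
    then have "sa c (SOME x. x \<in> coset ?J a) - sa c a \<in> ?J" by (simp add: V.scale_right_diff_distrib)
    then have "coset ?J (sa c (SOME x. x \<in> coset ?J a)) = coset ?J (sa c a)"
      using coset_eq_iff[OF J] by blast
    then show ?thesis using True ne unfolding hom_scale_def hom_of_def by simp
  next
    case False
    then show ?thesis unfolding hom_scale_def by (simp add: hom_of_notW[OF False])
  qed
qed

lemma hom_of_eq: "(\<And>m n. m \<in> WB sa G B \<Longrightarrow> n \<in> WB sa G C \<Longrightarrow> a - b \<in> Jid sa m n) \<Longrightarrow>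
    hom_of sa G a B C = hom_of sa G b B C"
proof (intro ext)
  fix m n
  assume h: "\<And>m n. m \<in> WB sa G B \<Longrightarrow> n \<in> WB sa G C \<Longrightarrow> a - b \<in> Jid sa m n"
  show "hom_of sa G a B C m n = hom_of sa G b B C m n"
  proof (cases "m \<in> WB sa G B \<and> n \<in> WB sa G C")
    case True
    then show ?thesis using h[of m n] coset_eq_iff[OF Jid_sub] hom_of_W by auto
  next
    case False
    then show ?thesis using hom_of_notW by simp
  qed
qed

lemma offdiag_zero:
  assumes B: "B \<in> objs sa G R" and C: "C \<in> objs sa G R" and ne: "B \<noteq> C" and x: "x \<in> G"
  shows "hom_of sa G x B C = hom_of sa G 0 B C"
proof (rule hom_of_eq)
  fix m n assume m: "m \<in> WB sa G B" and n: "n \<in> WB sa G C"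
  obtain u w where uw: "u \<in> m" "w \<in> n" "u + w = 1" using W_comax[OF B C ne m n] unfolding comax_def by auto
  have ex: "x = w * x + u * x"
  proof -
    have "(w + u) * x = w * x + u * x" by (simp add: distrib_right)
    moreover have "w + u = 1" using uw(3) by (simp add: add.commute)
    ultimately show ?thesis by simp
  qed
  have r: "w * x \<in> rid sa n" unfolding rid_def iprod_def using uw by (intro V.span_base) blast
  have "u * x \<in> m" using ts_right[OF W_ts[OF m B] x uw(1)] .
  then have "1 * (u * x) \<in> {x * y |x y. x \<in> UNIV \<and> y \<in> m}" by blast
  then have l: "u * x \<in> lid sa m" unfolding lid_def iprod_def using V.span_base[of "1 * (u * x)"] by simp
  have "w * x + u * x \<in> Jid sa m n" unfolding Jid_def using r l by blast
  then have "x \<in> Jid sa m n" using ex by simp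
  then show "x - 0 \<in> Jid sa m n" by simp
qed

end

locale sided = hcb sa G R for sa :: "'k::field \<Rightarrow> 'a::ring_1 \<Rightarrow> 'a" and G R +
  fixes mul :: "'a \<Rightarrow> 'a \<Rightarrow> 'a"
  assumes mul_assoc: "mul (mul x y) z = mul x (mul y z)"
  and mul_1l: "mul 1 x = x" and mul_1r: "mul x 1 = x"
  and mul_distl: "mul x (y + z) = mul x y + mul x z"
  and mul_distr: "mul (x + y) z = mul x z + mul y z"
  and mul_sal: "mul (sa c x) y = sa c (mul x y)" and mul_sar: "mul x (sa c y) = sa c (mul x y)"
  and mul_ts: "tsideal sa G I \<Longrightarrow> g \<in> G \<Longrightarrow> x \<in> I \<Longrightarrow> mul g x \<in> I \<and> mul x g \<in> I"
  and strong: "B \<in> objs sa G R \<Longrightarrow> m \<in> WB sa G B \<Longrightarrow>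
      strong_block_module sa G R UNIV (module.span sa {mul z x | z x. x \<in> m}) mul"
begin

definition "Lm m = V.span {mul z x | z x. x \<in> m}"
definition "Rm n = V.span {mul x z | x z. x \<in> n}"
definition "Jm m n = V.span ({mul z x | z x. x \<in> m} \<union> {mul x z | x z. x \<in> n})"

lemma Jm_alt: "Jm m n = {x + y | x y. x \<in> Lm m \<and> y \<in> Rm n}"
  unfolding Jm_def Lm_def Rm_def V.span_Un by simp

abbreviation "part C m v \<equiv> bpart sa G C mul (Lm m) v"

lemma mul_0l: "mul 0 x = 0"
  using mul_sal[of 0 0 x] by simp
lemma mul_0r: "mul x 0 = 0"
  using mul_sar[of x 0 0] by simp
lemma mul_diffl: "mul x (y - z) = mul x y - mul x z"
  using mul_distl[of x "y - z" z] by (simp add: algebra_simps)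
lemma mul_diffr: "mul (x - y) z = mul x z - mul y z"
  using mul_distr[of "x - y" y z] by (simp add: algebra_simps)
lemma mul_suml: "mul x (sum f S) = (\<Sum>i\<in>S. mul x (f i))"
  by (induction S rule: infinite_finite_induct) (auto simp: mul_distl mul_0r)

lemma Lm_sub[simp]: "V.subspace (Lm m)" unfolding Lm_def by simp
lemma Rm_sub[simp]: "V.subspace (Rm m)" unfolding Rm_def by simp
lemma Jm_sub[simp]: "V.subspace (Jm m n)" unfolding Jm_def by simp

lemma Lm_gen: "x \<in> m \<Longrightarrow> mul z x \<in> Lm m"
  unfolding Lm_def by (rule V.span_base) blast
lemma Rm_gen: "x \<in> n \<Longrightarrow> mul x z \<in> Rm n"
  unfolding Rm_def by (rule V.span_base) blast
lemma Lm_J: "Lm m \<subseteq> Jm m n"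
  unfolding Lm_def Jm_def by (rule V.span_mono) blast
lemma Rm_J: "Rm n \<subseteq> Jm m n"
  unfolding Rm_def Jm_def by (rule V.span_mono) blast
lemma Lm_mono: "m \<subseteq> m' \<Longrightarrow> Lm m \<subseteq> Lm m'"
  unfolding Lm_def by (rule V.span_mono) blast

lemma Lm_left: "w \<in> Lm m \<Longrightarrow> mul z w \<in> Lm m"
  unfolding Lm_def
  apply (rule span_map[where f="mul z"])
  apply (auto simp: mul_0r mul_distl mul_sar)
  by (metis (mono_tags, lifting) Lm_def Lm_gen mul_assoc)

lemma Rm_right: "w \<in> Rm n \<Longrightarrow> mul w z \<in> Rm n"
  unfolding Rm_def
  apply (rule span_map[where f="\<lambda>w. mul w z"])
  apply (auto simp: mul_0l mul_distr mul_sal)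
  by (metis (mono_tags, lifting) Rm_def Rm_gen mul_assoc)

lemma part_mono: "Lm m \<subseteq> Lm m' \<Longrightarrow> part C m v \<Longrightarrow> part C m' v"
  unfolding bpart_def by blast

lemma part_0: "part C m 0"
  unfolding bpart_def using WB.WB_one mul_0r V.subspace_0[OF Lm_sub] by metis

lemma part_add:
  assumes C: "C \<in> objs sa G R" and v: "part C m v" and w: "part C m w"
  shows "part C m (v + w)"
proof -
  obtain k1 where k1: "k1 \<in> WB sa G C" "\<forall>x\<in>k1. mul x v \<in> Lm m" using v unfolding bpart_def by blast
  obtain k2 where k2: "k2 \<in> WB sa G C" "\<forall>x\<in>k2. mul x w \<in> Lm m" using w unfolding bpart_def by blast
  obtain k where k: "k \<in> WB sa G C" "k \<subseteq> k1" "k \<subseteq> k2" using W_lb[OF k1(1) k2(1) C] by blast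
  have "\<forall>x\<in>k. mul x (v + w) \<in> Lm m"
  proof
    fix x assume "x \<in> k"
    then have "x \<in> k1" "x \<in> k2" using k by auto
    then have "mul x v \<in> Lm m" "mul x w \<in> Lm m" using k1 k2 by auto
    then show "mul x (v + w) \<in> Lm m" using V.subspace_add[OF Lm_sub] by (simp add: mul_distl)
  qed
  then show ?thesis unfolding bpart_def using k by blast
qed

lemma part_scale: "part C m v \<Longrightarrow> part C m (sa c v)"
  unfolding bpart_def by (auto simp: mul_sar intro: V.subspace_scale[OF Lm_sub])

lemma part_neg: "part C m v \<Longrightarrow> part C m (- v)"
  using part_scale[of C m v "-1"] by simp

lemma part_diff: "C \<in> objs sa G R \<Longrightarrow> part C m v \<Longrightarrow> part C m w \<Longrightarrow> part C m (v - w)"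
  using part_add[of C m v "- w"] part_neg by simp

lemma part_mulG:
  assumes C: "C \<in> objs sa G R" and g: "g \<in> G" and v: "part C m v"
  shows "part C m (mul g v)"
proof -
  obtain k where k: "k \<in> WB sa G C" "\<forall>x\<in>k. mul x v \<in> Lm m" using v unfolding bpart_def by blast
  have "\<forall>x\<in>k. mul x (mul g v) \<in> Lm m"
  proof
    fix x assume "x \<in> k"
    then have "mul x g \<in> k" using mul_ts[OF W_ts[OF k(1) C] g] by blast
    then show "mul x (mul g v) \<in> Lm m" using k(2) by (simp add: mul_assoc[symmetric])
  qed
  then show ?thesis unfolding bpart_def using k by blast
qed

lemma part_sum: "C \<in> objs sa G R \<Longrightarrow> (\<And>i. i \<in> S \<Longrightarrow> part C m (f i)) \<Longrightarrow> part C m (sum f S)"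
  by (induction S rule: infinite_finite_induct) (auto simp: part_0 part_add)

definition "fz f S D = (if D \<in> S then f D else 0)"

lemma sum_split: "finite S \<Longrightarrow> sum f S = fz f S C + sum f (S - {C})"
  unfolding fz_def by (auto simp: sum.remove)

lemma part_fz: "(\<forall>D\<in>S. part D m (f D)) \<Longrightarrow> part C m (fz f S C)"
  unfolding fz_def using part_0 by auto

lemma sum_fz: "finite T \<Longrightarrow> S \<subseteq> T \<Longrightarrow> sum (fz f S) T = sum f S"
proof -
  assume T: "finite T" and ST: "S \<subseteq> T"
  have "sum (fz f S) T = sum f (T \<inter> S)" unfolding fz_def using sum.inter_restrict[OF T, of f S] by simp
  also have "T \<inter> S = S" using ST by auto
  finally show ?thesis .
qed

context
  fixes B0 m
  assumes B0: "B0 \<in> objs sa G R" and m: "m \<in> WB sa G B0"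
begin

lemma sbm: "strong_block_module sa G R UNIV (Lm m) mul"
  using strong[OF B0 m] unfolding Lm_def .

lemma bm1: "\<forall>v\<in>UNIV. \<exists>S f. finite S \<and> S \<subseteq> objs sa G R \<and>
        (\<forall>B\<in>S. f B \<in> UNIV \<and> bpart sa G B mul (Lm m) (f B)) \<and> v - (\<Sum>B\<in>S. f B) \<in> Lm m"
  using sbm unfolding strong_block_module_def block_module_def by (rule conjunct1[OF conjunct1])

lemma bm2: "\<forall>S f. finite S \<and> S \<subseteq> objs sa G R \<and>
        (\<forall>B\<in>S. f B \<in> UNIV \<and> bpart sa G B mul (Lm m) (f B)) \<and> (\<Sum>B\<in>S. f B) \<in> Lm m
        \<longrightarrow> (\<forall>B\<in>S. f B \<in> Lm m)"
  using sbm unfolding strong_block_module_def block_module_def by (rule conjunct2[OF conjunct1])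

lemma bm3: "\<forall>B\<in>objs sa G R. \<exists>m'\<in>WB sa G B. \<forall>v\<in>UNIV. bpart sa G B mul (Lm m) v \<longrightarrow> (\<forall>x\<in>m'. mul x v \<in> Lm m)"
  using sbm unfolding strong_block_module_def by (rule conjunct2)

lemma dec:
  obtains S f where "finite S" "S \<subseteq> objs sa G R" "\<forall>D\<in>S. part D m (f D)" "a - sum f S \<in> Lm m"
proof -
  have "\<exists>S f. finite S \<and> S \<subseteq> objs sa G R \<and>
        (\<forall>B\<in>S. f B \<in> UNIV \<and> bpart sa G B mul (Lm m) (f B)) \<and> a - (\<Sum>B\<in>S. f B) \<in> Lm m"
    using bm1 by (rule bspec) (rule UNIV_I)
  then obtain S f where h: "finite S" "S \<subseteq> objs sa G R" "\<forall>B\<in>S. f B \<in> UNIV \<and> part B m (f B)"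
    "a - (\<Sum>B\<in>S. f B) \<in> Lm m"
    by (elim exE conjE)
  show ?thesis
  proof (rule that[of S f])
    show "\<forall>D\<in>S. part D m (f D)" using h(3) by simp
  qed (use h in auto)
qed

lemma uniq:
  assumes "finite S" "S \<subseteq> objs sa G R" "\<forall>D\<in>S. part D m (f D)" "sum f S \<in> Lm m" "D \<in> S"
  shows "f D \<in> Lm m"
proof -
  have imp: "finite S \<and> S \<subseteq> objs sa G R \<and>
        (\<forall>B\<in>S. f B \<in> UNIV \<and> bpart sa G B mul (Lm m) (f B)) \<and> (\<Sum>B\<in>S. f B) \<in> Lm m
        \<longrightarrow> (\<forall>B\<in>S. f B \<in> Lm m)"
    using spec[OF spec[OF bm2, of S], of f] .
  have "finite S \<and> S \<subseteq> objs sa G R \<and>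
        (\<forall>B\<in>S. f B \<in> UNIV \<and> bpart sa G B mul (Lm m) (f B)) \<and> (\<Sum>B\<in>S. f B) \<in> Lm m"
    using assms(1-4) by simp
  then have "\<forall>B\<in>S. f B \<in> Lm m" using imp by (rule rev_mp)
  then show ?thesis using assms(5) by (rule bspec)
qed

lemma killer:
  assumes C: "C \<in> objs sa G R"
  obtains k where "k \<in> WB sa G C" "\<And>v x. part C m v \<Longrightarrow> x \<in> k \<Longrightarrow> mul x v \<in> Lm m"
proof -
  have "\<exists>m'\<in>WB sa G C. \<forall>v\<in>UNIV. bpart sa G C mul (Lm m) v \<longrightarrow> (\<forall>x\<in>m'. mul x v \<in> Lm m)"
    using bm3 C by (rule bspec)
  then obtain k where k: "k \<in> WB sa G C" "\<forall>v\<in>UNIV. bpart sa G C mul (Lm m) v \<longrightarrow> (\<forall>x\<in>k. mul x v \<in> Lm m)"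
    by (elim bexE) 
  show ?thesis
  proof (rule that[OF k(1)])
    fix v x assume "part C m v" "x \<in> k"
    then show "mul x v \<in> Lm m" using k(2) by simp
  qed
qed

end

lemma off:
  assumes D: "D \<in> objs sa G R" and C: "C \<in> objs sa G R" and ne: "D \<noteq> C"
    and v: "part D m v" and g: "g \<in> G" and n: "n \<in> WB sa G C"
  shows "mul g v \<in> Jm m n"
proof -
  obtain q where q: "q \<in> WB sa G D" "\<forall>x\<in>q. mul x v \<in> Lm m" using v unfolding bpart_def by blast
  obtain u w where uw: "u \<in> q" "w \<in> n" "u + w = 1" using W_comax[OF D C ne q(1) n] unfolding comax_def by blast
  have p1: "mul u g \<in> q" using mul_ts[OF W_ts[OF q(1) D] g uw(1)] by blast
  have p2: "mul w g \<in> n" using mul_ts[OF W_ts[OF n C] g uw(2)] by blast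
  have eg: "mul u g + mul w g = g" using uw(3) mul_distr[of u w g] mul_1l by simp
  have "mul g v = mul (mul u g) v + mul (mul w g) v"
    using mul_distr[of "mul u g" "mul w g" v] eg by simp
  moreover have "mul (mul u g) v \<in> Jm m n" using q(2) p1 Lm_J by blast
  moreover have "mul (mul w g) v \<in> Jm m n" using Rm_gen[OF p2] Rm_J by blast
  ultimately show ?thesis using V.subspace_add[OF Jm_sub] by metis
qed

lemma off1:
  assumes "D \<in> objs sa G R" "C \<in> objs sa G R" "D \<noteq> C" "part D m v" "n \<in> WB sa G C"
  shows "v \<in> Jm m n"
  using off[OF assms(1-4) G1 assms(5)] mul_1l by simp

lemma comp_rep:
  assumes C: "C \<in> objs sa G R" and n: "n \<in> WB sa G C"
    and inj: "\<forall>a'. part C m a' \<and> a' \<in> Jm m n \<longrightarrow> a' \<in> Lm m"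
    and S: "finite S" "S \<subseteq> objs sa G R" "\<forall>D\<in>S. part D m (f D)" "a - sum f S \<in> Lm m"
    and a': "part C m a'" "a - a' \<in> Jm m n"
  shows "a' - fz f S C \<in> Lm m"
proof -
  have e: "a' - fz f S C = - (a - a') + (a - sum f S) + sum f (S - {C})"
    using sum_split[OF S(1), of f C] by (simp add: algebra_simps)
  have "sum f (S - {C}) \<in> Jm m n"
  proof (rule V.subspace_sum[OF Jm_sub])
    fix D assume D: "D \<in> S - {C}"
    then have "D \<in> objs sa G R" "D \<noteq> C" "part D m (f D)" using S by auto
    then show "f D \<in> Jm m n" using off1[of D C m "f D" n] C n by blast
  qed
  moreover have "- (a - a') \<in> Jm m n" using a'(2) V.subspace_neg[OF Jm_sub] by blast
  moreover have "a - sum f S \<in> Jm m n" using S(4) Lm_J by blast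
  ultimately have "a' - fz f S C \<in> Jm m n" unfolding e using V.subspace_add[OF Jm_sub] by metis
  moreover have "part C m (a' - fz f S C)" using part_diff[OF C a'(1) part_fz[OF S(3)]] .
  ultimately show ?thesis using inj by blast
qed

end

context sided begin

lemma dec_uniq:
  assumes B0: "B0 \<in> objs sa G R" and m: "m \<in> WB sa G B0"
    and S1: "finite S1" "S1 \<subseteq> objs sa G R" "\<forall>D\<in>S1. part D m (f1 D)"
    and S2: "finite S2" "S2 \<subseteq> objs sa G R" "\<forall>D\<in>S2. part D m (f2 D)"
    and d: "sum f1 S1 - sum f2 S2 \<in> Lm m"
  shows "fz f1 S1 D - fz f2 S2 D \<in> Lm m"
proof (cases "D \<in> S1 \<union> S2")
  case False
  then show ?thesis unfolding fz_def using V.subspace_0[OF Lm_sub] by simp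
next
  case True
  let ?T = "S1 \<union> S2"
  let ?h = "\<lambda>D. fz f1 S1 D - fz f2 S2 D"
  have T: "finite ?T" "?T \<subseteq> objs sa G R" using S1 S2 by auto
  have "sum ?h ?T = sum (fz f1 S1) ?T - sum (fz f2 S2) ?T" by (simp add: sum_subtractf)
  also have "\<dots> = sum f1 S1 - sum f2 S2" using sum_fz[OF T(1), of S1 f1] sum_fz[OF T(1), of S2 f2] by simp
  finally have "sum ?h ?T \<in> Lm m" using d by simp
  moreover have "\<forall>D\<in>?T. part D m (?h D)"
  proof
    fix D assume "D \<in> ?T"
    then have "D \<in> objs sa G R" using T by auto
    then show "part D m (?h D)" using part_diff part_fz S1(3) S2(3) by blast
  qed
  ultimately show ?thesis using uniq[OF B0 m T, of ?h D] True by blast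
qed

lemma skill:
  assumes C: "C \<in> objs sa G R" and n: "n \<in> WB sa G C"
    and inj: "\<forall>a'. part C m a' \<and> a' \<in> Jm m n \<longrightarrow> a' \<in> Lm m"
    and a': "part C m a'" and q: "q \<in> n"
  shows "mul q a' \<in> Lm m"
proof -
  have "q \<in> G" using ts_G[OF W_ts[OF n C]] q by blast
  then have "part C m (mul q a')" using part_mulG[OF C _ a'] by blast
  moreover have "mul q a' \<in> Jm m n" using Rm_gen[OF q] Rm_J by blast
  ultimately show ?thesis using inj by blast
qed

lemma skill2:
  assumes C: "C \<in> objs sa G R" and n: "n \<in> WB sa G C"
    and inj: "\<forall>a'. part C m a' \<and> a' \<in> Jm m n \<longrightarrow> a' \<in> Lm m"
    and a': "part C m a'" and w: "w \<in> Lm n"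
  shows "mul w a' \<in> Lm m"
  using w unfolding Lm_def[of n]
proof (rule span_map[where f="\<lambda>w. mul w a'"])
  show "V.subspace (Lm m)" by simp
  fix s assume "s \<in> {mul z x |z x. x \<in> n}"
  then obtain z x where s: "s = mul z x" "x \<in> n" by blast
  have "mul x a' \<in> Lm m" using skill[OF C n inj a' s(2)] .
  then show "mul s a' \<in> Lm m" using s Lm_left by (simp add: mul_assoc)
qed (auto simp: mul_0l mul_distr mul_sal)

lemma srep:
  assumes B0: "B0 \<in> objs sa G R" and m: "m \<in> WB sa G B0"
    and C: "C \<in> objs sa G R" and n: "n \<in> WB sa G C"
    and inj: "\<forall>a'. part C m a' \<and> a' \<in> Jm m n \<longrightarrow> a' \<in> Lm m"
    and a': "part C m a'" "a - a' \<in> Jm m n"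
    and g: "g \<in> G" and n': "n' \<in> WB sa G C"
  shows "mul g a - mul g a' \<in> Jm m n'"
proof -
  obtain S f where S: "finite S" "S \<subseteq> objs sa G R" "\<forall>D\<in>S. part D m (f D)" "a - sum f S \<in> Lm m"
    using dec[OF B0 m] by blast
  have c: "a' - fz f S C \<in> Lm m" using comp_rep[OF C n inj S a'] .
  have ea: "a = (a - sum f S) + fz f S C + sum f (S - {C})" using sum_split[OF S(1), of f C] by simp
  have "mul g a = mul g (a - sum f S) + mul g (fz f S C) + (\<Sum>D\<in>S-{C}. mul g (f D))"
    by (subst ea) (simp add: mul_distl mul_suml)
  then have e: "mul g a - mul g a' = mul g (a - sum f S) + (\<Sum>D\<in>S-{C}. mul g (f D)) + - mul g (a' - fz f S C)"
    by (simp add: mul_diffl algebra_simps)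
  have t1: "mul g (a - sum f S) \<in> Jm m n'" using Lm_left[OF S(4)] Lm_J by blast
  have t2: "(\<Sum>D\<in>S-{C}. mul g (f D)) \<in> Jm m n'"
  proof (rule V.subspace_sum[OF Jm_sub])
    fix D assume D: "D \<in> S - {C}"
    then have "D \<in> objs sa G R" "D \<noteq> C" "part D m (f D)" using S by auto
    then show "mul g (f D) \<in> Jm m n'" using off[of D C m "f D" g n'] C g n' by blast
  qed
  have t3: "- mul g (a' - fz f S C) \<in> Jm m n'" using Lm_left[OF c] Lm_J V.subspace_neg[OF Lm_sub] by blast
  show ?thesis unfolding e using t1 t2 t3 V.subspace_add[OF Jm_sub] by metis
qed

lemma surj:
  assumes B0: "B0 \<in> objs sa G R" and m: "m \<in> WB sa G B0"
    and C: "C \<in> objs sa G R" and n: "n \<in> WB sa G C"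
  shows "\<exists>a'. part C m a' \<and> a - a' \<in> Jm m n"
proof -
  obtain S f where S: "finite S" "S \<subseteq> objs sa G R" "\<forall>D\<in>S. part D m (f D)" "a - sum f S \<in> Lm m"
    using dec[OF B0 m] by blast
  have e: "a - fz f S C = (a - sum f S) + sum f (S - {C})" using sum_split[OF S(1), of f C] by (simp add: algebra_simps)
  have "sum f (S - {C}) \<in> Jm m n"
  proof (rule V.subspace_sum[OF Jm_sub])
    fix D assume D: "D \<in> S - {C}"
    then have "D \<in> objs sa G R" "D \<noteq> C" "part D m (f D)" using S by auto
    then show "f D \<in> Jm m n" using off1[of D C m "f D" n] C n by blast
  qed
  then have "a - fz f S C \<in> Jm m n" unfolding e using S(4) Lm_J V.subspace_add[OF Jm_sub] by blast
  moreover have "part C m (fz f S C)" using part_fz[OF S(3)] .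
  ultimately show ?thesis by blast
qed

lemma inj_ex:
  assumes B0: "B0 \<in> objs sa G R" and m: "m \<in> WB sa G B0" and C: "C \<in> objs sa G R"
  obtains k where "k \<in> WB sa G C"
    "\<And>n. n \<in> WB sa G C \<Longrightarrow> n \<subseteq> k \<Longrightarrow> \<forall>a'. part C m a' \<and> a' \<in> Jm m n \<longrightarrow> a' \<in> Lm m"
proof -
  obtain k where k: "k \<in> WB sa G C" "\<And>v x. part C m v \<Longrightarrow> x \<in> k \<Longrightarrow> mul x v \<in> Lm m"
    using killer[OF B0 m C] by blast
  define noC where "noC z \<longleftrightarrow> (\<exists>S f. finite S \<and> S \<subseteq> objs sa G R - {C} \<and>
      (\<forall>D\<in>S. part D m (f D)) \<and> z - sum f S \<in> Lm m)" for z
  have sub: "V.subspace {z. noC z}"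
    unfolding V.subspace_def
  proof (intro conjI ballI allI)
    show "0 \<in> {z. noC z}" unfolding noC_def
      by (intro CollectI exI[of _ "{}"] exI[of _ "\<lambda>_. 0"]) (simp add: V.subspace_0[OF Lm_sub])
  next
    fix x y assume "x \<in> {z. noC z}" "y \<in> {z. noC z}"
    then obtain S1 f1 S2 f2 where
      S1: "finite S1" "S1 \<subseteq> objs sa G R - {C}" "\<forall>D\<in>S1. part D m (f1 D)" "x - sum f1 S1 \<in> Lm m" and
      S2: "finite S2" "S2 \<subseteq> objs sa G R - {C}" "\<forall>D\<in>S2. part D m (f2 D)" "y - sum f2 S2 \<in> Lm m"
      unfolding noC_def by (auto simp del: Diff_iff)
    let ?S = "S1 \<union> S2"
    let ?f = "\<lambda>D. fz f1 S1 D + fz f2 S2 D"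
    have fin: "finite ?S" using S1 S2 by simp
    have "sum ?f ?S = sum f1 S1 + sum f2 S2"
      using sum_fz[OF fin, of S1 f1] sum_fz[OF fin, of S2 f2] by (simp add: sum.distrib)
    then have "(x + y) - sum ?f ?S = (x - sum f1 S1) + (y - sum f2 S2)" by (simp add: algebra_simps)
    then have "(x + y) - sum ?f ?S \<in> Lm m" using S1(4) S2(4) V.subspace_add[OF Lm_sub] by metis
    moreover have "\<forall>D\<in>?S. part D m (?f D)"
    proof
      fix D assume "D \<in> ?S"
      then have "D \<in> objs sa G R" using S1 S2 by auto
      then show "part D m (?f D)" using part_add part_fz S1(3) S2(3) by blast
    qed
    moreover have "?S \<subseteq> objs sa G R - {C}" using S1 S2 by auto
    ultimately show "x + y \<in> {z. noC z}" unfolding noC_def using fin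
      by (intro CollectI exI[of _ ?S] exI[of _ ?f] conjI) auto
  next
    fix c x assume "x \<in> {z. noC z}"
    then obtain S f where
      S: "finite S" "S \<subseteq> objs sa G R - {C}" "\<forall>D\<in>S. part D m (f D)" "x - sum f S \<in> Lm m"
      unfolding noC_def by (auto simp del: Diff_iff)
    have "sa c x - (\<Sum>D\<in>S. sa c (f D)) = sa c (x - sum f S)"
      by (simp add: V.scale_sum_right V.scale_right_diff_distrib)
    then have "sa c x - (\<Sum>D\<in>S. sa c (f D)) \<in> Lm m" using S(4) V.subspace_scale[OF Lm_sub] by metis
    moreover have "\<forall>D\<in>S. part D m (sa c (f D))" using S(3) part_scale by blast
    ultimately show "sa c x \<in> {z. noC z}" unfolding noC_def using S(1,2)
      by (intro CollectI exI[of _ S] exI[of _ "\<lambda>D. sa c (f D)"] conjI) auto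
  qed
  have gen: "noC s" if s: "s \<in> {mul x z |x z. x \<in> n}" and nk: "n \<subseteq> k" for s n
  proof -
    obtain x z where xz: "s = mul x z" "x \<in> n" using s by blast
    have xk: "x \<in> k" using xz nk by blast
    obtain S f where S: "finite S" "S \<subseteq> objs sa G R" "\<forall>D\<in>S. part D m (f D)" "z - sum f S \<in> Lm m"
      using dec[OF B0 m] by blast
    have xG: "x \<in> G" using ts_G[OF W_ts[OF k(1) C]] xk by blast
    have ez: "z = (z - sum f S) + fz f S C + sum f (S - {C})" using sum_split[OF S(1), of f C] by simp
    have "mul x z = mul x (z - sum f S) + mul x (fz f S C) + (\<Sum>D\<in>S-{C}. mul x (f D))"
      by (subst ez) (simp add: mul_distl mul_suml)
    then have e: "s - (\<Sum>D\<in>S-{C}. mul x (f D)) = mul x (z - sum f S) + mul x (fz f S C)"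
      using xz by simp
    have "mul x (fz f S C) \<in> Lm m"
    proof (cases "C \<in> S")
      case True
      then show ?thesis unfolding fz_def using k(2)[OF _ xk] S(3) by simp
    next
      case False
      then show ?thesis unfolding fz_def using mul_0r V.subspace_0[OF Lm_sub] by simp
    qed
    then have "s - (\<Sum>D\<in>S-{C}. mul x (f D)) \<in> Lm m" unfolding e
      using Lm_left[OF S(4)] V.subspace_add[OF Lm_sub] by blast
    moreover have "\<forall>D\<in>S-{C}. part D m (mul x (f D))"
    proof
      fix D assume "D \<in> S - {C}"
      then show "part D m (mul x (f D))" using part_mulG[OF _ xG] S by blast
    qed
    moreover have "finite (S - {C})" "S - {C} \<subseteq> objs sa G R - {C}" using S by auto
    ultimately show ?thesis unfolding noC_def
      by (intro exI[of _ "S - {C}"] exI[of _ "\<lambda>D. mul x (f D)"] conjI) auto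
  qed
  show ?thesis
  proof (rule that[OF k(1)])
    fix n assume n: "n \<in> WB sa G C" and nk: "n \<subseteq> k"
    show "\<forall>a'. part C m a' \<and> a' \<in> Jm m n \<longrightarrow> a' \<in> Lm m"
    proof (intro allI impI, elim conjE)
      fix a' assume pa: "part C m a'" and aJ: "a' \<in> Jm m n"
      obtain l r where lr: "a' = l + r" "l \<in> Lm m" "r \<in> Rm n" using aJ unfolding Jm_alt by blast
      have "noC r" using lr(3) unfolding Rm_def
        by (rule V.span_induct[of _ _ noC]) (use sub gen[OF _ nk] in auto)
      then obtain S f where
        S: "finite S" "S \<subseteq> objs sa G R - {C}" "\<forall>D\<in>S. part D m (f D)" "r - sum f S \<in> Lm m"
        unfolding noC_def by (auto simp del: Diff_iff)
      have CS: "C \<notin> S" using S(2) by blast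
      let ?T = "insert C S"
      let ?g = "\<lambda>D. if D = C then a' else - f D"
      have "sum ?g ?T = a' + sum ?g S" using S(1) CS by simp
      also have "sum ?g S = sum (\<lambda>D. - f D) S" using CS by (intro sum.cong) auto
      finally have "sum ?g ?T = a' - sum f S" by (simp add: sum_negf)
      also have "\<dots> = l + (r - sum f S)" using lr(1) by simp
      finally have "sum ?g ?T \<in> Lm m" using lr(2) S(4) V.subspace_add[OF Lm_sub] by metis
      moreover have "\<forall>D\<in>?T. part D m (?g D)" using pa S(3) part_neg by auto
      moreover have "finite ?T" "?T \<subseteq> objs sa G R" using S C by auto
      ultimately have "?g C \<in> Lm m" using uniq[OF B0 m, of ?T ?g C] by blast
      then show "a' \<in> Lm m" by simp
    qed
  qed
qed

end

sublocale hcb \<subseteq> Lf: sided sa G R "(*)"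
proof unfold_locales
  fix I g x assume "tsideal sa G I" "g \<in> G" "x \<in> I"
  then show "g * x \<in> I \<and> x * g \<in> I" using ts_left ts_right by blast
next
  fix B m assume B: "B \<in> objs sa G R" and m: "m \<in> WB sa G B"
  have e: "{z * x |z x. x \<in> m} = {x * y |x y. x \<in> UNIV \<and> y \<in> m}" by auto
  show "strong_block_module sa G R UNIV (module.span sa {z * x |z x. x \<in> m}) (*)"
    using shc B m unfolding strong_HC_block_subalg_def lid_def iprod_def e by blast
qed (auto simp: algebra_simps sa_mult1[symmetric] sa_mult2[symmetric])

sublocale hcb \<subseteq> Rt: sided sa G R "\<lambda>x y. y * x"
proof unfold_locales
  fix I g x assume "tsideal sa G I" "g \<in> G" "x \<in> I"
  then show "x * g \<in> I \<and> g * x \<in> I" using ts_left ts_right by blast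
next
  fix B m assume B: "B \<in> objs sa G R" and m: "m \<in> WB sa G B"
  have e: "{x * z |z x. x \<in> m} = {x * y |x y. x \<in> m \<and> y \<in> UNIV}" by auto
  show "strong_block_module sa G R UNIV (module.span sa {x * z |z x. x \<in> m}) (\<lambda>x y. y * x)"
    using shc B m unfolding strong_HC_block_subalg_def rid_def iprod_def e by blast
qed (auto simp: algebra_simps mult.assoc sa_mult1[symmetric] sa_mult2[symmetric])

context hcb begin

lemma Lf_Lm: "Lf.Lm m = lid sa m"
proof -
  have e: "{z * x |z x. x \<in> m} = {x * y |x y. x \<in> UNIV \<and> y \<in> m}" by auto
  show ?thesis unfolding Lf.Lm_def lid_def iprod_def e ..
qed
lemma Lf_Rm: "Lf.Rm n = rid sa n"
proof -
  have e: "{x * z |x z. x \<in> n} = {x * y |x y. x \<in> n \<and> y \<in> UNIV}" by auto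
  show ?thesis unfolding Lf.Rm_def rid_def iprod_def e ..
qed
lemma Rt_Lm: "Rt.Lm m = rid sa m"
proof -
  have e: "{x * z |z x. x \<in> m} = {x * y |x y. x \<in> m \<and> y \<in> UNIV}" by auto
  show ?thesis unfolding Rt.Lm_def rid_def iprod_def e ..
qed
lemma Rt_Rm: "Rt.Rm n = lid sa n"
proof -
  have e: "{z * x |x z. x \<in> n} = {x * y |x y. x \<in> UNIV \<and> y \<in> n}" by auto
  show ?thesis unfolding Rt.Rm_def lid_def iprod_def e ..
qed
lemma Lf_Jm: "Lf.Jm m n = Jid sa m n"
proof -
  have "Lf.Jm m n = {x + y | x y. x \<in> lid sa m \<and> y \<in> rid sa n}"
    unfolding Lf.Jm_alt Lf_Lm Lf_Rm ..
  also have "\<dots> = Jid sa m n" unfolding Jid_def by (auto, metis add.commute, metis add.commute)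
  finally show ?thesis .
qed
lemma Rt_Jm: "Rt.Jm l n = Jid sa n l"
  unfolding Rt.Jm_alt Rt_Lm Rt_Rm Jid_def ..

lemma comp_ex:
  assumes B: "B \<in> objs sa G R" and C: "C \<in> objs sa G R" and D: "D \<in> objs sa G R"
    and m: "m \<in> WB sa G B" and l: "l \<in> WB sa G D"
  shows "\<exists>t. comp_ok sa G C (hom_of sa G b C D) (hom_of sa G a B C) m l t"
proof -
  obtain kL where kL: "kL \<in> WB sa G C"
    "\<And>n. n \<in> WB sa G C \<Longrightarrow> n \<subseteq> kL \<Longrightarrow> \<forall>a'. Lf.part C m a' \<and> a' \<in> Lf.Jm m n \<longrightarrow> a' \<in> Lf.Lm m"
    using Lf.inj_ex[OF B m C] by blast
  obtain kR where kR: "kR \<in> WB sa G C"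
    "\<And>n. n \<in> WB sa G C \<Longrightarrow> n \<subseteq> kR \<Longrightarrow> \<forall>a'. Rt.part C l a' \<and> a' \<in> Rt.Jm l n \<longrightarrow> a' \<in> Rt.Lm l"
    using Rt.inj_ex[OF D l C] by blast
  obtain n where n: "n \<in> WB sa G C" "n \<subseteq> kL" "n \<subseteq> kR" using W_lb[OF kL(1) kR(1) C] by blast
  have injL: "\<forall>a'. bpart sa G C (\<lambda>x v. x * v) (lid sa m) a' \<and> a' \<in> Jid sa m n \<longrightarrow> a' \<in> lid sa m"
    using kL(2)[OF n(1,2)] unfolding Lf_Lm Lf_Jm by simp
  have injR: "\<forall>a'. bpart sa G C (\<lambda>x v. v * x) (rid sa l) a' \<and> a' \<in> Jid sa n l \<longrightarrow> a' \<in> rid sa l"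
    using kR(2)[OF n(1,3)] unfolding Rt_Lm Rt_Jm by simp
  have surL: "\<forall>a. \<exists>a'. bpart sa G C (\<lambda>x v. x * v) (lid sa m) a' \<and> a - a' \<in> Jid sa m n"
    using Lf.surj[OF B m C n(1)] unfolding Lf_Lm Lf_Jm by simp
  have surR: "\<forall>a. \<exists>a'. bpart sa G C (\<lambda>x v. v * x) (rid sa l) a' \<and> a - a' \<in> Jid sa n l"
    using Rt.surj[OF D l C n(1)] unfolding Rt_Lm Rt_Jm by simp
  obtain a0 where a0: "bpart sa G C (\<lambda>x v. x * v) (lid sa m) a0" "a - a0 \<in> Jid sa m n"
    using surL by blast
  obtain b0 where b0: "bpart sa G C (\<lambda>x v. v * x) (rid sa l) b0" "b - b0 \<in> Jid sa n l"
    using surR by blast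
  have "a0 - a \<in> Jid sa m n" using V.subspace_neg[OF Jid_sub a0(2)] by simp
  then have a0h: "a0 \<in> hom_of sa G a B C m n" using hom_of_W[OF m n(1)] by (simp add: coset_mem)
  have "b0 - b \<in> Jid sa n l" using V.subspace_neg[OF Jid_sub b0(2)] by simp
  then have b0h: "b0 \<in> hom_of sa G b C D n l" using hom_of_W[OF n(1) l] by (simp add: coset_mem)
  have "comp_ok sa G C (hom_of sa G b C D) (hom_of sa G a B C) m l (n, a0, b0)"
    unfolding comp_ok_def prod.case using n(1) injL injR surL surR a0(1) b0(1) a0h b0h by blast
  then show ?thesis by blast
qed

lemma hc_val:
  assumes B: "B \<in> objs sa G R" and C: "C \<in> objs sa G R" and D: "D \<in> objs sa G R"
    and m: "m \<in> WB sa G B" and l: "l \<in> WB sa G D"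
  obtains n a0 b0 where "n \<in> WB sa G C"
    "\<forall>a'. Lf.part C m a' \<and> a' \<in> Lf.Jm m n \<longrightarrow> a' \<in> Lf.Lm m"
    "\<forall>a'. Rt.part C l a' \<and> a' \<in> Rt.Jm l n \<longrightarrow> a' \<in> Rt.Lm l"
    "Lf.part C m a0" "a0 - a \<in> Jid sa m n"
    "Rt.part C l b0" "b0 - b \<in> Jid sa n l"
    "hom_comp sa G B C D (hom_of sa G b C D) (hom_of sa G a B C) m l = coset (Jid sa m l) (b0 * a0)"
proof -
  let ?P = "comp_ok sa G C (hom_of sa G b C D) (hom_of sa G a B C) m l"
  have "?P (SOME t. ?P t)" using comp_ex[OF B C D m l] by (rule someI_ex)
  moreover obtain n a0 b0 where t: "(SOME t. ?P t) = (n, a0, b0)" by (cases "SOME t. ?P t") auto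
  ultimately have P: "?P (n, a0, b0)" by simp
  have hc: "hom_comp sa G B C D (hom_of sa G b C D) (hom_of sa G a B C) m l = coset (Jid sa m l) (b0 * a0)"
    unfolding hom_comp_def using m l t by simp
  have n: "n \<in> WB sa G C" using P unfolding comp_ok_def by simp
  show ?thesis
  proof (rule that[OF n _ _ _ _ _ _ hc])
    show "\<forall>a'. Lf.part C m a' \<and> a' \<in> Lf.Jm m n \<longrightarrow> a' \<in> Lf.Lm m"
      using P unfolding comp_ok_def prod.case Lf_Lm Lf_Jm by simp
    show "\<forall>a'. Rt.part C l a' \<and> a' \<in> Rt.Jm l n \<longrightarrow> a' \<in> Rt.Lm l"
      using P unfolding comp_ok_def prod.case Rt_Lm Rt_Jm by simp
    show "Lf.part C m a0" using P unfolding comp_ok_def prod.case Lf_Lm by simp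
    show "Rt.part C l b0" using P unfolding comp_ok_def prod.case Rt_Lm by simp
    show "a0 - a \<in> Jid sa m n" using P hom_of_W[OF m n] unfolding comp_ok_def prod.case by (simp add: coset_mem)
    show "b0 - b \<in> Jid sa n l" using P hom_of_W[OF n l] unfolding comp_ok_def prod.case by (simp add: coset_mem)
  qed
qed

lemma comp_G:
  assumes B: "B \<in> objs sa G R" and C: "C \<in> objs sa G R" and x: "x \<in> G"
  shows "hom_comp sa G B B C (hom_of sa G y B C) (hom_of sa G x B B) = hom_of sa G (y * x) B C"
proof (intro ext)
  fix m l
  show "hom_comp sa G B B C (hom_of sa G y B C) (hom_of sa G x B B) m l = hom_of sa G (y * x) B C m l"
  proof (cases "m \<in> WB sa G B \<and> l \<in> WB sa G C")
    case False
    have "hom_comp sa G B B C (hom_of sa G y B C) (hom_of sa G x B B) m l = {}"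
      unfolding hom_comp_def by (rule if_not_P[OF False])
    then show ?thesis using hom_of_notW[OF False] by simp
  next
    case True
    then have m: "m \<in> WB sa G B" and l: "l \<in> WB sa G C" by auto
    obtain n a0 b0 where n: "n \<in> WB sa G B"
      and injL: "\<forall>a'. Lf.part B m a' \<and> a' \<in> Lf.Jm m n \<longrightarrow> a' \<in> Lf.Lm m"
      and injR: "\<forall>a'. Rt.part B l a' \<and> a' \<in> Rt.Jm l n \<longrightarrow> a' \<in> Rt.Lm l"
      and pa: "Lf.part B m a0" and a0: "a0 - x \<in> Jid sa m n"
      and pb: "Rt.part B l b0" and b0: "b0 - y \<in> Jid sa n l"
      and hc: "hom_comp sa G B B C (hom_of sa G y B C) (hom_of sa G x B B) m l = coset (Jid sa m l) (b0 * a0)"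
      by (rule hc_val[OF B B C m l, of x y])
    have "\<exists>r l'. a0 - x = r + l' \<and> r \<in> rid sa n \<and> l' \<in> lid sa m"
      using a0 unfolding Jid_def by simp
    then obtain r l' where rl: "a0 - x = r + l'" "r \<in> rid sa n" "l' \<in> lid sa m"
      by (elim exE conjE)
    have t1: "b0 * r \<in> rid sa l"
      using Rt.skill2[OF B n injR pb, of r] rl(2) unfolding Rt_Lm by simp
    have t2: "b0 * l' \<in> lid sa m"
      using Lf.Lm_left[of l' m b0] rl(3) unfolding Lf_Lm by simp
    have "y - b0 \<in> Rt.Jm l n" using V.subspace_neg[OF Jid_sub b0] unfolding Rt_Jm by simp
    then have t3: "y * x - b0 * x \<in> Jid sa m l"
      using Rt.srep[OF C l B n injR pb _ x m, of y] unfolding Rt_Jm by simp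
    have e: "b0 * a0 - y * x = b0 * r + b0 * l' - (y * x - b0 * x)"
    proof -
      have "a0 = x + r + l'" using rl(1) by (simp add: algebra_simps)
      then show ?thesis by (simp add: algebra_simps)
    qed
    have "b0 * r \<in> Jid sa m l" using t1 rid_J by blast
    moreover have "b0 * l' \<in> Jid sa m l" using t2 lid_J by blast
    ultimately have "b0 * r + b0 * l' \<in> Jid sa m l" by (rule V.subspace_add[OF Jid_sub])
    then have "b0 * a0 - y * x \<in> Jid sa m l"
      unfolding e using t3 by (rule V.subspace_diff[OF Jid_sub])
    then show ?thesis using hc hom_of_W[OF m l] coset_eq_iff[OF Jid_sub] by simp
  qed
qed

lemma hc_rep:
  assumes B: "B \<in> objs sa G R" and C: "C \<in> objs sa G R" and D: "D \<in> objs sa G R"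
    and m: "m \<in> WB sa G B" and l: "l \<in> WB sa G D"
    and S: "finite S" "S \<subseteq> objs sa G R" "\<forall>E\<in>S. Lf.part E m (f E)" "a - sum f S \<in> lid sa m"
    and T: "finite T" "T \<subseteq> objs sa G R" "\<forall>E\<in>T. Rt.part E l (g E)" "b - sum g T \<in> rid sa l"
  shows "hom_comp sa G B C D (hom_of sa G b C D) (hom_of sa G a B C) m l
      = coset (Jid sa m l) (Rt.fz g T C * Lf.fz f S C)"
proof -
  obtain n a0 b0 where n: "n \<in> WB sa G C"
    and injL: "\<forall>a'. Lf.part C m a' \<and> a' \<in> Lf.Jm m n \<longrightarrow> a' \<in> Lf.Lm m"
    and injR: "\<forall>a'. Rt.part C l a' \<and> a' \<in> Rt.Jm l n \<longrightarrow> a' \<in> Rt.Lm l"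
    and pa: "Lf.part C m a0" and a0: "a0 - a \<in> Jid sa m n"
    and pb: "Rt.part C l b0" and b0: "b0 - b \<in> Jid sa n l"
    and hc: "hom_comp sa G B C D (hom_of sa G b C D) (hom_of sa G a B C) m l = coset (Jid sa m l) (b0 * a0)"
    by (rule hc_val[OF B C D m l, of a b])
  have "a - a0 \<in> Lf.Jm m n" using V.subspace_neg[OF Jid_sub a0] unfolding Lf_Jm by simp
  then have ca: "a0 - Lf.fz f S C \<in> lid sa m"
    using Lf.comp_rep[OF C n injL S(1,2,3), of a a0] S(4) pa unfolding Lf_Lm by simp
  have "b - b0 \<in> Rt.Jm l n" using V.subspace_neg[OF Jid_sub b0] unfolding Rt_Jm by simp
  then have cb: "b0 - Rt.fz g T C \<in> rid sa l"
    using Rt.comp_rep[OF C n injR T(1,2,3), of b b0] T(4) pb unfolding Rt_Lm by simp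
  have t1: "b0 * (a0 - Lf.fz f S C) \<in> lid sa m" using Lf.Lm_left[of _ m b0] ca unfolding Lf_Lm by simp
  have t2: "(b0 - Rt.fz g T C) * Lf.fz f S C \<in> rid sa l"
    using Rt.Lm_left[of _ l "Lf.fz f S C"] cb unfolding Rt_Lm by simp
  have e: "b0 * a0 - Rt.fz g T C * Lf.fz f S C = b0 * (a0 - Lf.fz f S C) + (b0 - Rt.fz g T C) * Lf.fz f S C"
    by (simp add: algebra_simps)
  have "b0 * (a0 - Lf.fz f S C) \<in> Jid sa m l" using t1 lid_J by blast
  moreover have "(b0 - Rt.fz g T C) * Lf.fz f S C \<in> Jid sa m l" using t2 rid_J by blast
  ultimately have "b0 * a0 - Rt.fz g T C * Lf.fz f S C \<in> Jid sa m l"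
    unfolding e by (rule V.subspace_add[OF Jid_sub])
  then show ?thesis using hc coset_eq_iff[OF Jid_sub] by simp
qed

lemma hc_homset:
  assumes B: "B \<in> objs sa G R" and C: "C \<in> objs sa G R" and D: "D \<in> objs sa G R"
  shows "hom_comp sa G B C D (hom_of sa G b C D) (hom_of sa G a B C) \<in> homset sa G B D"
  unfolding homset_def
proof (intro CollectI conjI allI impI)
  fix m l assume ml: "m \<in> WB sa G B \<and> l \<in> WB sa G D"
  have m: "m \<in> WB sa G B" and l: "l \<in> WB sa G D" using ml by auto
  obtain n a0 b0 where "n \<in> WB sa G C"
    "\<forall>a'. Lf.part C m a' \<and> a' \<in> Lf.Jm m n \<longrightarrow> a' \<in> Lf.Lm m"
    "\<forall>a'. Rt.part C l a' \<and> a' \<in> Rt.Jm l n \<longrightarrow> a' \<in> Rt.Lm l"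
    "Lf.part C m a0" "a0 - a \<in> Jid sa m n"
    "Rt.part C l b0" "b0 - b \<in> Jid sa n l"
    "hom_comp sa G B C D (hom_of sa G b C D) (hom_of sa G a B C) m l = coset (Jid sa m l) (b0 * a0)"
    by (rule hc_val[OF B C D m l, of a b])
  then show "\<exists>c. hom_comp sa G B C D (hom_of sa G b C D) (hom_of sa G a B C) m l = coset (Jid sa m l) c"
    by (intro exI)
next
  fix m l assume "\<not> (m \<in> WB sa G B \<and> l \<in> WB sa G D)"
  then show "hom_comp sa G B C D (hom_of sa G b C D) (hom_of sa G a B C) m l = {}"
    unfolding hom_comp_def by (rule if_not_P)
next
  fix m m' l l' assume h: "m \<in> WB sa G B \<and> m' \<in> WB sa G B \<and> l \<in> WB sa G D \<and> l' \<in> WB sa G D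
        \<and> m \<subseteq> m' \<and> l \<subseteq> l'"
  then have m: "m \<in> WB sa G B" and m': "m' \<in> WB sa G B" and l: "l \<in> WB sa G D" and l': "l' \<in> WB sa G D"
    and mm: "m \<subseteq> m'" and ll: "l \<subseteq> l'" by auto
  obtain S f where S: "finite S" "S \<subseteq> objs sa G R" "\<forall>E\<in>S. Lf.part E m (f E)" "a - sum f S \<in> Lf.Lm m"
    using Lf.dec[OF B m] by blast
  obtain T g where T: "finite T" "T \<subseteq> objs sa G R" "\<forall>E\<in>T. Rt.part E l (g E)" "b - sum g T \<in> Rt.Lm l"
    using Rt.dec[OF D l] by blast
  have S': "\<forall>E\<in>S. Lf.part E m' (f E)" "a - sum f S \<in> Lf.Lm m'"
    using S(3,4) Lf.part_mono[OF Lf.Lm_mono[OF mm]] Lf.Lm_mono[OF mm] by auto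
  have T': "\<forall>E\<in>T. Rt.part E l' (g E)" "b - sum g T \<in> Rt.Lm l'"
    using T(3,4) Rt.part_mono[OF Rt.Lm_mono[OF ll]] Rt.Lm_mono[OF ll] by auto
  have e1: "hom_comp sa G B C D (hom_of sa G b C D) (hom_of sa G a B C) m l
      = coset (Jid sa m l) (Rt.fz g T C * Lf.fz f S C)"
    using hc_rep[OF B C D m l S(1,2,3) _ T(1,2,3)] S(4) T(4) unfolding Lf_Lm Rt_Lm by simp
  have e2: "hom_comp sa G B C D (hom_of sa G b C D) (hom_of sa G a B C) m' l'
      = coset (Jid sa m' l') (Rt.fz g T C * Lf.fz f S C)"
    using hc_rep[OF B C D m' l' S(1,2) S'(1) _ T(1,2) T'(1)] S'(2) T'(2) unfolding Lf_Lm Rt_Lm by simp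
  show "hom_comp sa G B C D (hom_of sa G b C D) (hom_of sa G a B C) m l
      \<subseteq> hom_comp sa G B C D (hom_of sa G b C D) (hom_of sa G a B C) m' l'"
    unfolding e1 e2 using coset_sub[OF Jid_mono[OF mm ll]] .
qed

end

locale amod = hcb sa G R for sa :: "'k::field \<Rightarrow> 'a::ring_1 \<Rightarrow> 'a" and G R +
  fixes sv :: "'k \<Rightarrow> 'v::ab_group_add \<Rightarrow> 'v" and Fo :: "'a set set \<Rightarrow> 'v set"
    and Fm :: "'a set set \<Rightarrow> 'a set set \<Rightarrow> 'a hom \<Rightarrow> 'v \<Rightarrow> 'v"
  assumes vs: "vector_space sv" and prof: "profinite_Amodule sa G R sv Fo Fm"
begin

sublocale VV: vector_space sv by (rule vs)

lemma ism: "is_Amodule sa G R sv Fo Fm"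
  using prof unfolding profinite_Amodule_def by (rule conjunct1)

lemma F_sub: "B \<in> objs sa G R \<Longrightarrow> module.subspace sv (Fo B)"
  using ism unfolding is_Amodule_def by auto

lemma F_in: "B \<in> objs sa G R \<Longrightarrow> C \<in> objs sa G R \<Longrightarrow> \<alpha> \<in> homset sa G B C \<Longrightarrow> v \<in> Fo B
    \<Longrightarrow> Fm B C \<alpha> v \<in> Fo C"
  using ism unfolding is_Amodule_def by auto

lemma F_addv: "B \<in> objs sa G R \<Longrightarrow> C \<in> objs sa G R \<Longrightarrow> \<alpha> \<in> homset sa G B C \<Longrightarrow> v \<in> Fo B
    \<Longrightarrow> w \<in> Fo B \<Longrightarrow> Fm B C \<alpha> (v + w) = Fm B C \<alpha> v + Fm B C \<alpha> w"
  using ism unfolding is_Amodule_def by auto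

lemma F_scalev: "B \<in> objs sa G R \<Longrightarrow> C \<in> objs sa G R \<Longrightarrow> \<alpha> \<in> homset sa G B C \<Longrightarrow> v \<in> Fo B
    \<Longrightarrow> Fm B C \<alpha> (sv c v) = sv c (Fm B C \<alpha> v)"
  using ism unfolding is_Amodule_def by auto

lemma F_hadd: "B \<in> objs sa G R \<Longrightarrow> C \<in> objs sa G R \<Longrightarrow> \<alpha> \<in> homset sa G B C \<Longrightarrow> \<beta> \<in> homset sa G B C
    \<Longrightarrow> v \<in> Fo B \<Longrightarrow> Fm B C (hom_add \<alpha> \<beta>) v = Fm B C \<alpha> v + Fm B C \<beta> v"
  using ism unfolding is_Amodule_def by auto

lemma F_hscale: "B \<in> objs sa G R \<Longrightarrow> C \<in> objs sa G R \<Longrightarrow> \<alpha> \<in> homset sa G B C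
    \<Longrightarrow> v \<in> Fo B \<Longrightarrow> Fm B C (hom_scale sa c \<alpha>) v = sv c (Fm B C \<alpha> v)"
  using ism unfolding is_Amodule_def by auto

lemma F_id: "B \<in> objs sa G R \<Longrightarrow> v \<in> Fo B \<Longrightarrow> Fm B B (hom_of sa G 1 B B) v = v"
  using ism unfolding is_Amodule_def by auto

lemma F_comp: "B \<in> objs sa G R \<Longrightarrow> C \<in> objs sa G R \<Longrightarrow> D \<in> objs sa G R \<Longrightarrow>
    \<alpha> \<in> homset sa G B C \<Longrightarrow> \<beta> \<in> homset sa G C D \<Longrightarrow> v \<in> Fo B \<Longrightarrow>
    Fm B D (hom_comp sa G B C D \<beta> \<alpha>) v = Fm C D \<beta> (Fm B C \<alpha> v)"
  using ism unfolding is_Amodule_def by auto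

lemma F_prof: "B \<in> objs sa G R \<Longrightarrow> C \<in> objs sa G R \<Longrightarrow> \<alpha> \<in> homset sa G B C \<Longrightarrow>
    finite S \<Longrightarrow> S \<subseteq> Fo B \<Longrightarrow>
    (\<exists>I. finite I \<and> I \<subseteq> WB sa G B \<times> WB sa G C \<and>
           (\<forall>\<beta>\<in>homset sa G B C. (\<forall>(m, n)\<in>I. \<beta> m n = \<alpha> m n) \<longrightarrow>
              (\<forall>v\<in>VV.span S. Fm B C \<beta> v = Fm B C \<alpha> v)))"
  using prof unfolding profinite_Amodule_def by blast

lemma Fm_zero: "B \<in> objs sa G R \<Longrightarrow> C \<in> objs sa G R \<Longrightarrow> \<alpha> \<in> homset sa G B C \<Longrightarrow> Fm B C \<alpha> 0 = 0"
  using F_addv[of B C \<alpha> 0 0] VV.subspace_0[OF F_sub] by simp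

lemma Fm_sum: "B \<in> objs sa G R \<Longrightarrow> C \<in> objs sa G R \<Longrightarrow> \<alpha> \<in> homset sa G B C \<Longrightarrow>
    (\<And>i. i \<in> S \<Longrightarrow> f i \<in> Fo B) \<Longrightarrow> Fm B C \<alpha> (sum f S) = (\<Sum>i\<in>S. Fm B C \<alpha> (f i))"
proof (induction S rule: infinite_finite_induct)
  case (infinite A)
  then show ?case using Fm_zero by simp
next
  case empty
  then show ?case using Fm_zero by simp
next
  case (insert x F)
  have "sum f F \<in> Fo B" using insert by (intro VV.subspace_sum[OF F_sub]) auto
  then show ?case using insert F_addv by simp
qed

lemma phi_add: "B \<in> objs sa G R \<Longrightarrow> C \<in> objs sa G R \<Longrightarrow> v \<in> Fo B \<Longrightarrow>
    Fm B C (hom_of sa G (a + b) B C) v = Fm B C (hom_of sa G a B C) v + Fm B C (hom_of sa G b B C) v"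
  using F_hadd[OF _ _ hom_of_homset hom_of_homset] hom_add_of by metis

lemma phi_scale: "B \<in> objs sa G R \<Longrightarrow> C \<in> objs sa G R \<Longrightarrow> v \<in> Fo B \<Longrightarrow>
    Fm B C (hom_of sa G (sa c a) B C) v = sv c (Fm B C (hom_of sa G a B C) v)"
  using F_hscale[OF _ _ hom_of_homset] hom_scale_of by metis

lemma phi_0: "B \<in> objs sa G R \<Longrightarrow> C \<in> objs sa G R \<Longrightarrow> v \<in> Fo B \<Longrightarrow>
    Fm B C (hom_of sa G 0 B C) v = 0"
  using phi_scale[of B C v 0 0] by simp

lemma phi_diff: "B \<in> objs sa G R \<Longrightarrow> C \<in> objs sa G R \<Longrightarrow> v \<in> Fo B \<Longrightarrow>
    Fm B C (hom_of sa G (a - b) B C) v = Fm B C (hom_of sa G a B C) v - Fm B C (hom_of sa G b B C) v"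
  using phi_add[of B C v "a - b" b] by simp

lemma phi_sum: "B \<in> objs sa G R \<Longrightarrow> C \<in> objs sa G R \<Longrightarrow> v \<in> Fo B \<Longrightarrow>
    Fm B C (hom_of sa G (sum f S) B C) v = (\<Sum>i\<in>S. Fm B C (hom_of sa G (f i) B C) v)"
  by (induction S rule: infinite_finite_induct) (auto simp: phi_0 phi_add)

lemma phi_in: "B \<in> objs sa G R \<Longrightarrow> C \<in> objs sa G R \<Longrightarrow> v \<in> Fo B \<Longrightarrow>
    Fm B C (hom_of sa G a B C) v \<in> Fo C"
  using F_in[OF _ _ hom_of_homset] by blast

lemma phi_ker: "B \<in> objs sa G R \<Longrightarrow> C \<in> objs sa G R \<Longrightarrow> v \<in> Fo B \<Longrightarrow>
    V.subspace {a. Fm B C (hom_of sa G a B C) v = 0}"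
  unfolding V.subspace_def using phi_0 phi_add phi_scale by auto

lemma homsetD1: "\<alpha> \<in> homset sa G B C \<Longrightarrow> m \<in> WB sa G B \<Longrightarrow> n \<in> WB sa G C \<Longrightarrow>
    \<exists>a. \<alpha> m n = coset (Jid sa m n) a"
  unfolding homset_def by auto

lemma homsetD3: "\<alpha> \<in> homset sa G B C \<Longrightarrow> m \<in> WB sa G B \<Longrightarrow> m' \<in> WB sa G B \<Longrightarrow>
    n \<in> WB sa G C \<Longrightarrow> n' \<in> WB sa G C \<Longrightarrow> m \<subseteq> m' \<Longrightarrow> n \<subseteq> n' \<Longrightarrow> \<alpha> m n \<subseteq> \<alpha> m' n'"
  unfolding homset_def by auto

lemma coset_rebase: "p \<in> coset (Jid sa m n) a \<Longrightarrow> coset (Jid sa m n) a = coset (Jid sa m n) p"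
  using coset_eq_iff[OF Jid_sub] V.subspace_neg[OF Jid_sub] by (simp add: coset_mem) (metis minus_diff_eq)

lemma cont:
  assumes B: "B \<in> objs sa G R" and C: "C \<in> objs sa G R" and \<alpha>: "\<alpha> \<in> homset sa G B C" and v: "v \<in> Fo B"
  obtains m n where "m \<in> WB sa G B" "n \<in> WB sa G C"
    "\<And>m' n' \<beta>. m' \<in> WB sa G B \<Longrightarrow> n' \<in> WB sa G C \<Longrightarrow> m' \<subseteq> m \<Longrightarrow> n' \<subseteq> n \<Longrightarrow>
       \<beta> \<in> homset sa G B C \<Longrightarrow> \<beta> m' n' = \<alpha> m' n' \<Longrightarrow> Fm B C \<beta> v = Fm B C \<alpha> v"
proof -
  obtain I where I: "finite I" "I \<subseteq> WB sa G B \<times> WB sa G C"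
    "\<forall>\<beta>\<in>homset sa G B C. (\<forall>(m, n)\<in>I. \<beta> m n = \<alpha> m n) \<longrightarrow>
              (\<forall>v'\<in>VV.span {v}. Fm B C \<beta> v' = Fm B C \<alpha> v')"
    using F_prof[OF B C \<alpha>, of "{v}"] v by blast
  obtain m where m: "m \<in> WB sa G B" "\<forall>x\<in>fst ` I. m \<subseteq> x"
    using W_lb_fin[of "fst ` I" B] I B by force
  obtain n where n: "n \<in> WB sa G C" "\<forall>x\<in>snd ` I. n \<subseteq> x"
    using W_lb_fin[of "snd ` I" C] I C by force
  show ?thesis
  proof (rule that[OF m(1) n(1)])
    fix m' n' \<beta> assume m': "m' \<in> WB sa G B" and n': "n' \<in> WB sa G C" and mm: "m' \<subseteq> m" and nn: "n' \<subseteq> n"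
      and \<beta>: "\<beta> \<in> homset sa G B C" and eq: "\<beta> m' n' = \<alpha> m' n'"
    have "\<forall>(mi, ni)\<in>I. \<beta> mi ni = \<alpha> mi ni"
    proof (clarify)
      fix mi ni assume i: "(mi, ni) \<in> I"
      then have mi: "mi \<in> WB sa G B" and ni: "ni \<in> WB sa G C" using I(2) by auto
      have "m \<subseteq> mi" "n \<subseteq> ni" using m(2) n(2) i by force+
      then have sub: "m' \<subseteq> mi" "n' \<subseteq> ni" using mm nn by auto
      obtain a2 where a2: "\<alpha> m' n' = coset (Jid sa m' n') a2" using homsetD1[OF \<alpha> m' n'] by blast
      have p: "a2 \<in> \<alpha> m' n'" unfolding a2 by (rule coset_self[OF Jid_sub])
      have pa: "a2 \<in> \<alpha> mi ni" using homsetD3[OF \<alpha> m' mi n' ni sub] p by blast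
      have pb: "a2 \<in> \<beta> mi ni" using homsetD3[OF \<beta> m' mi n' ni sub] p eq by blast
      obtain a1 where a1: "\<alpha> mi ni = coset (Jid sa mi ni) a1" using homsetD1[OF \<alpha> mi ni] by blast
      obtain b1 where b1: "\<beta> mi ni = coset (Jid sa mi ni) b1" using homsetD1[OF \<beta> mi ni] by blast
      show "\<beta> mi ni = \<alpha> mi ni"
        using coset_rebase[of a2 mi ni a1] coset_rebase[of a2 mi ni b1] pa pb a1 b1 by simp
    qed
    then have "\<forall>v'\<in>VV.span {v}. Fm B C \<beta> v' = Fm B C \<alpha> v'" using I(3) \<beta> by blast
    then show "Fm B C \<beta> v = Fm B C \<alpha> v" using VV.span_base[of v "{v}"] by blast
  qed
qed

lemma contc:
  assumes B: "B \<in> objs sa G R" and C: "C \<in> objs sa G R" and v: "v \<in> Fo B"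
  obtains m n where "m \<in> WB sa G B" "n \<in> WB sa G C"
    "\<And>m' n' x. m' \<in> WB sa G B \<Longrightarrow> n' \<in> WB sa G C \<Longrightarrow> m' \<subseteq> m \<Longrightarrow> n' \<subseteq> n \<Longrightarrow>
       x - c \<in> Jid sa m' n' \<Longrightarrow> Fm B C (hom_of sa G x B C) v = Fm B C (hom_of sa G c B C) v"
proof -
  obtain m n where m: "m \<in> WB sa G B" and n: "n \<in> WB sa G C"
    and h: "\<And>m' n' \<beta>. m' \<in> WB sa G B \<Longrightarrow> n' \<in> WB sa G C \<Longrightarrow> m' \<subseteq> m \<Longrightarrow> n' \<subseteq> n \<Longrightarrow>
       \<beta> \<in> homset sa G B C \<Longrightarrow> \<beta> m' n' = hom_of sa G c B C m' n' \<Longrightarrow> Fm B C \<beta> v = Fm B C (hom_of sa G c B C) v"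
    using cont[OF B C hom_of_homset v, of c] by blast
  show ?thesis
  proof (rule that[OF m n])
    fix m' n' x assume m': "m' \<in> WB sa G B" and n': "n' \<in> WB sa G C" and "m' \<subseteq> m" "n' \<subseteq> n"
      and x: "x - c \<in> Jid sa m' n'"
    moreover have "hom_of sa G x B C m' n' = hom_of sa G c B C m' n'"
      using hom_of_W[OF m' n'] coset_eq_iff[OF Jid_sub] x by simp
    ultimately show "Fm B C (hom_of sa G x B C) v = Fm B C (hom_of sa G c B C) v"
      using h hom_of_homset by blast
  qed
qed

lemma cont0:
  assumes B: "B \<in> objs sa G R" and C: "C \<in> objs sa G R" and v: "v \<in> Fo B"
  obtains m n where "m \<in> WB sa G B" "n \<in> WB sa G C"
    "\<And>x. x \<in> Jid sa m n \<Longrightarrow> Fm B C (hom_of sa G x B C) v = 0"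
proof -
  obtain m n where m: "m \<in> WB sa G B" and n: "n \<in> WB sa G C"
    and h: "\<And>m' n' x. m' \<in> WB sa G B \<Longrightarrow> n' \<in> WB sa G C \<Longrightarrow> m' \<subseteq> m \<Longrightarrow> n' \<subseteq> n \<Longrightarrow>
       x - 0 \<in> Jid sa m' n' \<Longrightarrow> Fm B C (hom_of sa G x B C) v = Fm B C (hom_of sa G 0 B C) v"
    using contc[OF B C v, of 0] by blast
  show ?thesis
  proof (rule that[OF m n])
    fix x assume "x \<in> Jid sa m n"
    then show "Fm B C (hom_of sa G x B C) v = 0" using h[OF m n] phi_0[OF B C v] by simp
  qed
qed

lemma offphi: "B \<in> objs sa G R \<Longrightarrow> C \<in> objs sa G R \<Longrightarrow> B \<noteq> C \<Longrightarrow> x \<in> G \<Longrightarrow> v \<in> Fo B \<Longrightarrow>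
    Fm B C (hom_of sa G x B C) v = 0"
  using offdiag_zero phi_0 by metis

lemma mem_lid: "x \<in> m \<Longrightarrow> x \<in> lid sa m"
  using Lf.Lm_gen[of x m 1] unfolding Lf_Lm by simp

lemma mem_rid: "x \<in> m \<Longrightarrow> x \<in> rid sa m"
  using Rt.Lm_gen[of x m 1] unfolding Rt_Lm by simp

lemma kill:
  assumes B: "B \<in> objs sa G R" and v: "v \<in> Fo B"
  obtains m0 where "m0 \<in> WB sa G B" "\<And>x. x \<in> m0 \<Longrightarrow> Fm B B (hom_of sa G x B B) v = 0"
proof -
  obtain m n where m: "m \<in> WB sa G B" and n: "n \<in> WB sa G B"
    and h: "\<And>x. x \<in> Jid sa m n \<Longrightarrow> Fm B B (hom_of sa G x B B) v = 0"
    using cont0[OF B B v] by blast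
  show ?thesis
  proof (rule that[OF m])
    fix x assume "x \<in> m"
    then have "x \<in> Jid sa m n" using mem_lid lid_J by blast
    then show "Fm B B (hom_of sa G x B B) v = 0" by (rule h)
  qed
qed

lemma kill_lid:
  assumes B: "B \<in> objs sa G R" and C: "C \<in> objs sa G R" and v: "v \<in> Fo B"
    and m0: "m0 \<in> WB sa G B" and k: "\<And>x. x \<in> m0 \<Longrightarrow> Fm B B (hom_of sa G x B B) v = 0"
    and z: "z \<in> lid sa m0"
  shows "Fm B C (hom_of sa G z B C) v = 0"
proof -
  have "z \<in> V.span {y * x |y x. x \<in> m0}" using z unfolding Lf_Lm[symmetric] Lf.Lm_def .
  then show ?thesis
  proof (induction rule: V.span_induct)
    case base
    show ?case using phi_ker[OF B C v] by simp
  next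
    case (step s)
    then obtain y x where s: "s = y * x" "x \<in> m0" by blast
    have xG: "x \<in> G" using ts_G[OF W_ts[OF m0 B]] s(2) by blast
    have "Fm B C (hom_of sa G (y * x) B C) v
        = Fm B C (hom_comp sa G B B C (hom_of sa G y B C) (hom_of sa G x B B)) v"
      using comp_G[OF B C xG, of y] by simp
    also have "\<dots> = Fm B C (hom_of sa G y B C) (Fm B B (hom_of sa G x B B) v)"
      using F_comp[OF B B C hom_of_homset hom_of_homset v] .
    also have "\<dots> = 0" using k[OF s(2)] Fm_zero[OF B C hom_of_homset] by simp
    finally show ?case using s by simp
  qed
qed

lemma part_off:
  assumes B: "B \<in> objs sa G R" and C: "C \<in> objs sa G R" and E: "E \<in> objs sa G R" and v: "v \<in> Fo B"
    and m0: "m0 \<in> WB sa G B" and k: "\<And>x. x \<in> m0 \<Longrightarrow> Fm B B (hom_of sa G x B B) v = 0"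
    and pe: "Lf.part E m0 e" and ne: "E \<noteq> C"
  shows "Fm B C (hom_of sa G e B C) v = 0"
proof -
  obtain q where q: "q \<in> WB sa G E" "\<forall>x\<in>q. x * e \<in> lid sa m0"
    using pe unfolding bpart_def Lf_Lm by blast
  obtain m1 n1 where m1: "m1 \<in> WB sa G B" and n1: "n1 \<in> WB sa G C"
    and h: "\<And>x. x \<in> Jid sa m1 n1 \<Longrightarrow> Fm B C (hom_of sa G x B C) v = 0"
    using cont0[OF B C v] by blast
  obtain u w where uw: "u \<in> q" "w \<in> n1" "u + w = 1" using W_comax[OF E C ne q(1) n1] unfolding comax_def by blast
  have ee: "e = u * e + w * e"
  proof -
    have "(u + w) * e = u * e + w * e" by (simp add: distrib_right)
    then show ?thesis using uw(3) by simp
  qed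
  have "Fm B C (hom_of sa G (u * e) B C) v = 0"
    using kill_lid[OF B C v m0 k] q(2) uw(1) by blast
  moreover have "w * e \<in> Jid sa m1 n1" using mem_rid[OF uw(2)] Rt.Lm_left[of w n1 e] rid_J unfolding Rt_Lm by blast
  then have "Fm B C (hom_of sa G (w * e) B C) v = 0" by (rule h)
  ultimately have "Fm B C (hom_of sa G (u * e + w * e) B C) v = 0" using phi_add[OF B C v] by simp
  then show ?thesis using ee by simp
qed

lemma FIN:
  assumes B: "B \<in> objs sa G R" and v: "v \<in> Fo B"
  shows "finite {C \<in> objs sa G R. Fm B C (hom_of sa G a B C) v \<noteq> 0}"
proof -
  obtain m0 where m0: "m0 \<in> WB sa G B" and k: "\<And>x. x \<in> m0 \<Longrightarrow> Fm B B (hom_of sa G x B B) v = 0"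
    using kill[OF B v] by blast
  obtain S f where S: "finite S" "S \<subseteq> objs sa G R" "\<forall>D\<in>S. Lf.part D m0 (f D)" "a - sum f S \<in> Lf.Lm m0"
    using Lf.dec[OF B m0] by blast
  have "{C \<in> objs sa G R. Fm B C (hom_of sa G a B C) v \<noteq> 0} \<subseteq> S"
  proof (rule subsetI, rule ccontr)
    fix C assume C: "C \<in> {C \<in> objs sa G R. Fm B C (hom_of sa G a B C) v \<noteq> 0}" and nS: "C \<notin> S"
    then have Co: "C \<in> objs sa G R" by simp
    have ea: "a = (a - sum f S) + sum f S" by simp
    have "Fm B C (hom_of sa G (a - sum f S) B C) v = 0"
      using kill_lid[OF B Co v m0 k] S(4) unfolding Lf_Lm by blast
    moreover have "Fm B C (hom_of sa G (sum f S) B C) v = 0"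
      unfolding phi_sum[OF B Co v]
    proof (rule sum.neutral, rule ballI)
      fix D assume D: "D \<in> S"
      then have "D \<noteq> C" using nS by blast
      then show "Fm B C (hom_of sa G (f D) B C) v = 0"
        using part_off[OF B Co _ v m0 k] S(2,3) D by blast
    qed
    ultimately have "Fm B C (hom_of sa G a B C) v = 0"
      using phi_add[OF B Co v, of "a - sum f S" "sum f S"] by simp
    then show False using C by simp
  qed
  then show ?thesis using S(1) finite_subset by blast
qed

end

context amod begin

lemma comp_part:
  assumes B: "B \<in> objs sa G R" and E: "E \<in> objs sa G R" and D: "D \<in> objs sa G R" and v: "v \<in> Fo B"
    and m0: "m0 \<in> WB sa G B" and k: "\<And>x. x \<in> m0 \<Longrightarrow> Fm B B (hom_of sa G x B B) v = 0"
    and pe: "Lf.part E m0 e"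
  shows "Fm B D (hom_of sa G (a * e) B D) v = Fm E D (hom_of sa G a E D) (Fm B E (hom_of sa G e B E) v)"
proof -
  let ?g = "hom_comp sa G B E D (hom_of sa G a E D) (hom_of sa G e B E)"
  have g: "?g \<in> homset sa G B D" by (rule hc_homset[OF B E D])
  have fc: "Fm B D ?g v = Fm E D (hom_of sa G a E D) (Fm B E (hom_of sa G e B E) v)"
    by (rule F_comp[OF B E D hom_of_homset hom_of_homset v])
  obtain m1 l1 where m1: "m1 \<in> WB sa G B" and l1: "l1 \<in> WB sa G D"
    and h1: "\<And>m' n' \<beta>. m' \<in> WB sa G B \<Longrightarrow> n' \<in> WB sa G D \<Longrightarrow> m' \<subseteq> m1 \<Longrightarrow> n' \<subseteq> l1 \<Longrightarrow>
       \<beta> \<in> homset sa G B D \<Longrightarrow> \<beta> m' n' = ?g m' n' \<Longrightarrow> Fm B D \<beta> v = Fm B D ?g v"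
    using cont[OF B D g v] by blast
  obtain m2 l2 where m2: "m2 \<in> WB sa G B" and l2: "l2 \<in> WB sa G D"
    and h2: "\<And>m' n' x. m' \<in> WB sa G B \<Longrightarrow> n' \<in> WB sa G D \<Longrightarrow> m' \<subseteq> m2 \<Longrightarrow> n' \<subseteq> l2 \<Longrightarrow>
       x - a * e \<in> Jid sa m' n' \<Longrightarrow> Fm B D (hom_of sa G x B D) v = Fm B D (hom_of sa G (a * e) B D) v"
    using contc[OF B D v, of "a * e"] by blast
  obtain m3 where m3: "m3 \<in> WB sa G B" "m3 \<subseteq> m1" "m3 \<subseteq> m2" using W_lb[OF m1 m2 B] by blast
  obtain ms where ms: "ms \<in> WB sa G B" "ms \<subseteq> m3" "ms \<subseteq> m0" using W_lb[OF m3(1) m0 B] by blast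
  obtain ls where ls: "ls \<in> WB sa G D" "ls \<subseteq> l1" "ls \<subseteq> l2" using W_lb[OF l1 l2 D] by blast
  obtain n a0 b0 where n: "n \<in> WB sa G E"
    and injL: "\<forall>a'. Lf.part E ms a' \<and> a' \<in> Lf.Jm ms n \<longrightarrow> a' \<in> Lf.Lm ms"
    and injR: "\<forall>a'. Rt.part E ls a' \<and> a' \<in> Rt.Jm ls n \<longrightarrow> a' \<in> Rt.Lm ls"
    and pa: "Lf.part E ms a0" and a0e: "a0 - e \<in> Jid sa ms n"
    and pb: "Rt.part E ls b0" and b0a: "b0 - a \<in> Jid sa n ls"
    and hc: "?g ms ls = coset (Jid sa ms ls) (b0 * a0)"
    by (rule hc_val[OF B E D ms(1) ls(1), of e a])
  obtain S f where S: "finite S" "S \<subseteq> objs sa G R" "\<forall>D\<in>S. Lf.part D ms (f D)" "e - sum f S \<in> Lf.Lm ms"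
    using Lf.dec[OF B ms(1)] by blast
  have "e - a0 \<in> Lf.Jm ms n" using V.subspace_neg[OF Jid_sub a0e] unfolding Lf_Jm by simp
  then have c1: "a0 - Lf.fz f S E \<in> Lf.Lm ms" using Lf.comp_rep[OF E n injL S pa] by blast
  have mono: "Lf.Lm ms \<subseteq> Lf.Lm m0" using Lf.Lm_mono[OF ms(3)] .
  have S': "\<forall>D\<in>S. Lf.part D m0 (f D)" using S(3) Lf.part_mono[OF mono] by blast
  have "sum f S - e \<in> Lf.Lm ms" using V.subspace_neg[OF Lf.Lm_sub S(4)] by simp
  then have d: "sum f S - sum (\<lambda>_. e) {E} \<in> Lf.Lm m0" using mono by auto
  have c2: "Lf.fz f S E - Lf.fz (\<lambda>_. e) {E} E \<in> Lf.Lm m0"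
    using Lf.dec_uniq[OF B m0 S(1,2) S' _ _ _ d] E pe by simp
  have "a0 - e = (a0 - Lf.fz f S E) + (Lf.fz f S E - Lf.fz (\<lambda>_. e) {E} E)"
    unfolding Lf.fz_def by simp
  then have a0e0: "a0 - e \<in> lid sa m0"
    using c1 c2 mono V.subspace_add[OF Lf.Lm_sub] unfolding Lf_Lm by (metis subsetD)
  have "\<exists>r l'. b0 - a = r + l' \<and> r \<in> rid sa ls \<and> l' \<in> lid sa n"
    using b0a unfolding Jid_def by simp
  then obtain r l' where rl: "b0 - a = r + l'" "r \<in> rid sa ls" "l' \<in> lid sa n"
    by (elim exE conjE)
  have t1: "r * a0 \<in> rid sa ls" using Rt.Lm_left[of r ls a0] rl(2) unfolding Rt_Lm by simp
  have t2: "l' * a0 \<in> lid sa ms" using Lf.skill2[OF E n injL pa, of l'] rl(3) unfolding Lf_Lm by simp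
  have t3: "a * (a0 - e) \<in> lid sa m0" using Lf.Lm_left[of "a0 - e" m0 a] a0e0 unfolding Lf_Lm by simp
  define j where "j = r * a0 + l' * a0"
  have j: "j \<in> Jid sa ms ls"
  proof -
    have "r * a0 \<in> Jid sa ms ls" using t1 rid_J by blast
    moreover have "l' * a0 \<in> Jid sa ms ls" using t2 lid_J by blast
    ultimately show ?thesis unfolding j_def by (rule V.subspace_add[OF Jid_sub])
  qed
  have ec: "b0 * a0 = (a * e + j) + a * (a0 - e)"
  proof -
    have "b0 = a + r + l'" using rl(1) by (simp add: algebra_simps)
    then show ?thesis unfolding j_def by (simp add: algebra_simps)
  qed
  have "hom_of sa G (b0 * a0) B D ms ls = ?g ms ls" using hom_of_W[OF ms(1) ls(1)] hc by simp
  then have s1: "Fm B D (hom_of sa G (b0 * a0) B D) v = Fm B D ?g v"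
    using h1[OF ms(1) ls(1) _ _ hom_of_homset] ms m3 ls by blast
  have s2: "Fm B D (hom_of sa G (b0 * a0) B D) v
      = Fm B D (hom_of sa G (a * e + j) B D) v + Fm B D (hom_of sa G (a * (a0 - e)) B D) v"
    unfolding ec by (rule phi_add[OF B D v])
  have s3: "Fm B D (hom_of sa G (a * (a0 - e)) B D) v = 0"
    using kill_lid[OF B D v m0 k t3] .
  have s4: "Fm B D (hom_of sa G (a * e + j) B D) v = Fm B D (hom_of sa G (a * e) B D) v"
    using h2[OF ms(1) ls(1)] ms m3 ls j by simp
  show ?thesis using s1 s2 s3 s4 fc by simp
qed

lemma phi_dec:
  assumes B: "B \<in> objs sa G R" and C: "C \<in> objs sa G R" and v: "v \<in> Fo B"
    and m0: "m0 \<in> WB sa G B" and k: "\<And>x. x \<in> m0 \<Longrightarrow> Fm B B (hom_of sa G x B B) v = 0"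
    and S: "finite S" "S \<subseteq> objs sa G R" "\<forall>D\<in>S. Lf.part D m0 (f D)" "b - sum f S \<in> lid sa m0"
  shows "Fm B C (hom_of sa G b B C) v = (if C \<in> S then Fm B C (hom_of sa G (f C) B C) v else 0)"
proof -
  have z: "Fm B C (hom_of sa G (b - sum f S) B C) v = 0" using kill_lid[OF B C v m0 k S(4)] .
  have others: "Fm B C (hom_of sa G (f D) B C) v = 0" if "D \<in> S" "D \<noteq> C" for D
    using part_off[OF B C _ v m0 k] S(2,3) that by blast
  have "Fm B C (hom_of sa G (sum f S) B C) v = (\<Sum>D\<in>S. Fm B C (hom_of sa G (f D) B C) v)"
    by (rule phi_sum[OF B C v])
  also have "\<dots> = (if C \<in> S then Fm B C (hom_of sa G (f C) B C) v else 0)"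
  proof (cases "C \<in> S")
    case True
    then have "(\<Sum>D\<in>S. Fm B C (hom_of sa G (f D) B C) v)
        = Fm B C (hom_of sa G (f C) B C) v + (\<Sum>D\<in>S - {C}. Fm B C (hom_of sa G (f D) B C) v)"
      using S(1) by (simp add: sum.remove)
    also have "(\<Sum>D\<in>S - {C}. Fm B C (hom_of sa G (f D) B C) v) = 0"
      using others by (intro sum.neutral) auto
    finally show ?thesis using True by simp
  next
    case False
    have "(\<Sum>D\<in>S. Fm B C (hom_of sa G (f D) B C) v) = 0"
      using others False by (intro sum.neutral) auto
    then show ?thesis using False by simp
  qed
  finally have "Fm B C (hom_of sa G (sum f S) B C) v = (if C \<in> S then Fm B C (hom_of sa G (f C) B C) v else 0)" .
  moreover have "Fm B C (hom_of sa G b B C) v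
      = Fm B C (hom_of sa G (b - sum f S) B C) v + Fm B C (hom_of sa G (sum f S) B C) v"
    using phi_add[OF B C v, of "b - sum f S" "sum f S"] by simp
  ultimately show ?thesis using z by simp
qed

lemma mult:
  assumes B: "B \<in> objs sa G R" and D: "D \<in> objs sa G R" and v: "v \<in> Fo B"
    and K: "finite K" "K \<subseteq> objs sa G R" "{C \<in> objs sa G R. Fm B C (hom_of sa G b B C) v \<noteq> 0} \<subseteq> K"
  shows "Fm B D (hom_of sa G (a * b) B D) v
      = (\<Sum>C\<in>K. Fm C D (hom_of sa G a C D) (Fm B C (hom_of sa G b B C) v))"
proof -
  obtain m0 where m0: "m0 \<in> WB sa G B" and k: "\<And>x. x \<in> m0 \<Longrightarrow> Fm B B (hom_of sa G x B B) v = 0"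
    using kill[OF B v] by blast
  obtain S f where S: "finite S" "S \<subseteq> objs sa G R" "\<forall>D\<in>S. Lf.part D m0 (f D)" "b - sum f S \<in> Lf.Lm m0"
    using Lf.dec[OF B m0] by blast
  have S4: "b - sum f S \<in> lid sa m0" using S(4) unfolding Lf_Lm .
  let ?t = "\<lambda>C. Fm C D (hom_of sa G a C D) (Fm B C (hom_of sa G (f C) B C) v)"
  have bS: "\<And>C. C \<in> objs sa G R \<Longrightarrow> Fm B C (hom_of sa G b B C) v
      = (if C \<in> S then Fm B C (hom_of sa G (f C) B C) v else 0)"
    using phi_dec[OF B _ v m0 k S(1,2,3) S4] by blast
  have "(\<Sum>C\<in>K. Fm C D (hom_of sa G a C D) (Fm B C (hom_of sa G b B C) v))
      = (\<Sum>C\<in>K. if C \<in> S then ?t C else 0)"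
  proof (rule sum.cong[OF refl])
    fix C assume "C \<in> K"
    then have C: "C \<in> objs sa G R" using K by auto
    show "Fm C D (hom_of sa G a C D) (Fm B C (hom_of sa G b B C) v) = (if C \<in> S then ?t C else 0)"
      using bS[OF C] Fm_zero[OF C D hom_of_homset] by simp
  qed
  also have "\<dots> = sum ?t (K \<inter> S)" using sum.inter_restrict[OF K(1), of ?t S] by simp
  finally have rhs: "(\<Sum>C\<in>K. Fm C D (hom_of sa G a C D) (Fm B C (hom_of sa G b B C) v)) = sum ?t (K \<inter> S)" .
  have "sum ?t (K \<inter> S) = sum ?t S"
  proof (rule sum.mono_neutral_left[OF S(1)])
    show "K \<inter> S \<subseteq> S" by blast
    show "\<forall>i\<in>S - K \<inter> S. ?t i = 0"
    proof
      fix E assume E: "E \<in> S - K \<inter> S"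
      then have Eo: "E \<in> objs sa G R" "E \<notin> K" "E \<in> S" using S(2) by auto
      then have "Fm B E (hom_of sa G b B E) v = 0" using K(3) by blast
      then have "Fm B E (hom_of sa G (f E) B E) v = 0" using bS[OF Eo(1)] Eo(3) by simp
      then show "?t E = 0" using Fm_zero[OF Eo(1) D hom_of_homset] by simp
    qed
  qed
  also have "\<dots> = (\<Sum>E\<in>S. Fm B D (hom_of sa G (a * f E) B D) v)"
  proof (rule sum.cong[OF refl])
    fix E assume "E \<in> S"
    then show "?t E = Fm B D (hom_of sa G (a * f E) B D) v"
      using comp_part[OF B _ D v m0 k, of E "f E" a] S(2,3) by auto
  qed
  also have "\<dots> = Fm B D (hom_of sa G (\<Sum>E\<in>S. a * f E) B D) v"
    using phi_sum[OF B D v, of "\<lambda>E. a * f E" S] by simp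
  also have "\<dots> = Fm B D (hom_of sa G (a * sum f S) B D) v" by (simp add: sum_distrib_left)
  finally have lhs1: "sum ?t (K \<inter> S) = Fm B D (hom_of sa G (a * sum f S) B D) v" .
  have "a * (b - sum f S) \<in> lid sa m0" using Lf.Lm_left[of _ m0 a] S(4) unfolding Lf_Lm by simp
  then have z: "Fm B D (hom_of sa G (a * (b - sum f S)) B D) v = 0" using kill_lid[OF B D v m0 k] by blast
  have "Fm B D (hom_of sa G (a * b) B D) v
      = Fm B D (hom_of sa G (a * (b - sum f S)) B D) v + Fm B D (hom_of sa G (a * sum f S) B D) v"
    using phi_add[OF B D v, of "a * (b - sum f S)" "a * sum f S"] by (simp add: algebra_simps)
  then show ?thesis using z lhs1 rhs by simp
qed

end

lemma sum_fun_apply: "(sum f S) x = sum (\<lambda>i. f i x) S"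
  by (induction S rule: infinite_finite_induct) auto

context amod begin

lemma HF_supp: "h \<in> HF sa G R Fo \<Longrightarrow> finite {B. h B \<noteq> 0}"
  unfolding HF_def by simp
lemma HF_val: "h \<in> HF sa G R Fo \<Longrightarrow> B \<in> objs sa G R \<Longrightarrow> h B \<in> Fo B"
  unfolding HF_def by (metis (mono_tags, lifting) mem_Collect_eq)
lemma HF_out: "h \<in> HF sa G R Fo \<Longrightarrow> B \<notin> objs sa G R \<Longrightarrow> h B = 0"
  unfolding HF_def by (metis (mono_tags, lifting) mem_Collect_eq)
lemma HF_supp_objs: "h \<in> HF sa G R Fo \<Longrightarrow> {B. h B \<noteq> 0} \<subseteq> objs sa G R"
  using HF_out by blast
lemma HF_I: "finite {B. h B \<noteq> 0} \<Longrightarrow> (\<And>B. B \<in> objs sa G R \<Longrightarrow> h B \<in> Fo B) \<Longrightarrow>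
    (\<And>B. B \<notin> objs sa G R \<Longrightarrow> h B = 0) \<Longrightarrow> h \<in> HF sa G R Fo"
  unfolding HF_def by auto

lemma Hact_T:
  assumes h: "h \<in> HF sa G R Fo" and T: "finite T" "T \<subseteq> objs sa G R" "{B. h B \<noteq> 0} \<subseteq> T"
    and C: "C \<in> objs sa G R"
  shows "Hact sa G R Fm a h C = (\<Sum>B\<in>T. Fm B C (hom_of sa G a B C) (h B))"
proof -
  have "Hact sa G R Fm a h C = (\<Sum>B\<in>{B. h B \<noteq> 0}. Fm B C (hom_of sa G a B C) (h B))"
    unfolding Hact_def using C by simp
  also have "\<dots> = (\<Sum>B\<in>T. Fm B C (hom_of sa G a B C) (h B))"
  proof (rule sum.mono_neutral_left[OF T(1) T(3)])
    show "\<forall>i\<in>T - {B. h B \<noteq> 0}. Fm i C (hom_of sa G a i C) (h i) = 0"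
      using T(2) C Fm_zero[OF _ _ hom_of_homset] by auto
  qed
  finally show ?thesis .
qed

lemma Hact_out: "C \<notin> objs sa G R \<Longrightarrow> Hact sa G R Fm a h C = 0"
  unfolding Hact_def by simp

lemma Hact_HF:
  assumes h: "h \<in> HF sa G R Fo"
  shows "Hact sa G R Fm a h \<in> HF sa G R Fo"
proof (rule HF_I)
  let ?S = "{B. h B \<noteq> 0}"
  have S: "finite ?S" "?S \<subseteq> objs sa G R" using HF_supp[OF h] HF_supp_objs[OF h] by auto
  have "{C. Hact sa G R Fm a h C \<noteq> 0} \<subseteq> (\<Union>B\<in>?S. {C \<in> objs sa G R. Fm B C (hom_of sa G a B C) (h B) \<noteq> 0})"
  proof
    fix C assume C: "C \<in> {C. Hact sa G R Fm a h C \<noteq> 0}"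
    then have Co: "C \<in> objs sa G R" using Hact_out by auto
    have "(\<Sum>B\<in>?S. Fm B C (hom_of sa G a B C) (h B)) \<noteq> 0" using C Co unfolding Hact_def by simp
    then obtain B where "B \<in> ?S" "Fm B C (hom_of sa G a B C) (h B) \<noteq> 0" by (meson sum.neutral)
    then show "C \<in> (\<Union>B\<in>?S. {C \<in> objs sa G R. Fm B C (hom_of sa G a B C) (h B) \<noteq> 0})" using Co by blast
  qed
  moreover have "finite (\<Union>B\<in>?S. {C \<in> objs sa G R. Fm B C (hom_of sa G a B C) (h B) \<noteq> 0})"
    using S FIN HF_val[OF h] by (intro finite_UN_I) auto
  ultimately show "finite {C. Hact sa G R Fm a h C \<noteq> 0}" by (rule finite_subset)
next
  fix C assume C: "C \<in> objs sa G R"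
  show "Hact sa G R Fm a h C \<in> Fo C"
    unfolding Hact_def using C HF_supp_objs[OF h] HF_val[OF h]
    by (auto intro!: VV.subspace_sum[OF F_sub[OF C]] phi_in)
next
  fix C assume "C \<notin> objs sa G R"
  then show "Hact sa G R Fm a h C = 0" by (rule Hact_out)
qed

lemma Fmod: "module (\<lambda>c (h :: 'a set set \<Rightarrow> 'v) B. sv c (h B))"
  unfolding module_def
  by (auto simp: VV.scale_right_distrib VV.scale_left_distrib)

lemma HF_subspace: "module.subspace (\<lambda>c h B. sv c (h B)) (HF sa G R Fo)"
  unfolding module.subspace_def[OF Fmod]
proof (intro conjI ballI allI)
  show "0 \<in> HF sa G R Fo" by (rule HF_I) (auto intro: VV.subspace_0[OF F_sub])
next
  fix x y assume x: "x \<in> HF sa G R Fo" and y: "y \<in> HF sa G R Fo"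
  show "x + y \<in> HF sa G R Fo"
  proof (rule HF_I)
    have "{B. (x + y) B \<noteq> 0} \<subseteq> {B. x B \<noteq> 0} \<union> {B. y B \<noteq> 0}" by auto
    then show "finite {B. (x + y) B \<noteq> 0}" using HF_supp[OF x] HF_supp[OF y] by (meson finite_UnI finite_subset)
  qed (auto simp: HF_out[OF x] HF_out[OF y] intro: VV.subspace_add[OF F_sub] HF_val[OF x] HF_val[OF y])
next
  fix c x assume x: "x \<in> HF sa G R Fo"
  show "(\<lambda>B. sv c (x B)) \<in> HF sa G R Fo"
  proof (rule HF_I)
    have "{B. sv c (x B) \<noteq> 0} \<subseteq> {B. x B \<noteq> 0}" by auto
    then show "finite {B. sv c (x B) \<noteq> 0}" using HF_supp[OF x] by (rule finite_subset)
  qed (auto simp: HF_out[OF x] intro: VV.subspace_scale[OF F_sub] HF_val[OF x])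
qed

lemma Hact_1:
  assumes h: "h \<in> HF sa G R Fo"
  shows "Hact sa G R Fm 1 h = h"
proof
  fix C
  let ?S = "{B. h B \<noteq> 0}"
  show "Hact sa G R Fm 1 h C = h C"
  proof (cases "C \<in> objs sa G R")
    case False
    then show ?thesis using Hact_out HF_out[OF h] by simp
  next
    case C: True
    let ?T = "insert C ?S"
    have T: "finite ?T" "?T \<subseteq> objs sa G R" "?S \<subseteq> ?T" using HF_supp[OF h] HF_supp_objs[OF h] C by auto
    have "Hact sa G R Fm 1 h C = (\<Sum>B\<in>?T. Fm B C (hom_of sa G 1 B C) (h B))"
      by (rule Hact_T[OF h T C])
    also have "\<dots> = Fm C C (hom_of sa G 1 C C) (h C) + (\<Sum>B\<in>?T - {C}. Fm B C (hom_of sa G 1 B C) (h B))"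
      by (rule sum.remove[OF T(1)]) simp
    also have "(\<Sum>B\<in>?T - {C}. Fm B C (hom_of sa G 1 B C) (h B)) = 0"
    proof (rule sum.neutral, rule ballI)
      fix B assume "B \<in> ?T - {C}"
      then have "B \<in> objs sa G R" "B \<noteq> C" using T by auto
      then show "Fm B C (hom_of sa G 1 B C) (h B) = 0" using offphi[OF _ C _ G1] HF_val[OF h] by blast
    qed
    also have "Fm C C (hom_of sa G 1 C C) (h C) = h C" using F_id[OF C HF_val[OF h C]] .
    finally show ?thesis by simp
  qed
qed

lemma Hact_addl:
  assumes h: "h \<in> HF sa G R Fo"
  shows "Hact sa G R Fm (a + b) h = Hact sa G R Fm a h + Hact sa G R Fm b h"
proof
  fix C
  show "Hact sa G R Fm (a + b) h C = (Hact sa G R Fm a h + Hact sa G R Fm b h) C"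
  proof (cases "C \<in> objs sa G R")
    case False
    then show ?thesis using Hact_out by simp
  next
    case C: True
    then show ?thesis unfolding Hact_def using phi_add[OF _ C] HF_val[OF h] HF_supp_objs[OF h]
      by (auto simp: sum.distrib[symmetric] intro!: sum.cong)
  qed
qed

lemma Hact_sal:
  assumes h: "h \<in> HF sa G R Fo"
  shows "Hact sa G R Fm (sa c a) h = (\<lambda>B. sv c (Hact sa G R Fm a h B))"
proof
  fix C
  show "Hact sa G R Fm (sa c a) h C = sv c (Hact sa G R Fm a h C)"
  proof (cases "C \<in> objs sa G R")
    case False
    then show ?thesis using Hact_out by simp
  next
    case C: True
    then show ?thesis unfolding Hact_def using phi_scale[OF _ C] HF_val[OF h] HF_supp_objs[OF h]
      by (auto simp: VV.scale_sum_right intro!: sum.cong)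
  qed
qed

lemma Hact_addr:
  assumes h: "h \<in> HF sa G R Fo" and h': "h' \<in> HF sa G R Fo"
  shows "Hact sa G R Fm a (h + h') = Hact sa G R Fm a h + Hact sa G R Fm a h'"
proof
  fix C
  show "Hact sa G R Fm a (h + h') C = (Hact sa G R Fm a h + Hact sa G R Fm a h') C"
  proof (cases "C \<in> objs sa G R")
    case False
    then show ?thesis using Hact_out by simp
  next
    case C: True
    let ?T = "{B. h B \<noteq> 0} \<union> {B. h' B \<noteq> 0}"
    have hh: "h + h' \<in> HF sa G R Fo" using HF_subspace h h' unfolding module.subspace_def[OF Fmod] by blast
    have T: "finite ?T" "?T \<subseteq> objs sa G R" using HF_supp[OF h] HF_supp[OF h'] HF_supp_objs[OF h] HF_supp_objs[OF h'] by auto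
    have e1: "Hact sa G R Fm a (h + h') C = (\<Sum>B\<in>?T. Fm B C (hom_of sa G a B C) ((h + h') B))"
      by (rule Hact_T[OF hh T]) (auto simp: C)
    have e2: "Hact sa G R Fm a h C = (\<Sum>B\<in>?T. Fm B C (hom_of sa G a B C) (h B))"
      by (rule Hact_T[OF h T]) (auto simp: C)
    have e3: "Hact sa G R Fm a h' C = (\<Sum>B\<in>?T. Fm B C (hom_of sa G a B C) (h' B))"
      by (rule Hact_T[OF h' T]) (auto simp: C)
    have "(\<Sum>B\<in>?T. Fm B C (hom_of sa G a B C) ((h + h') B))
        = (\<Sum>B\<in>?T. Fm B C (hom_of sa G a B C) (h B) + Fm B C (hom_of sa G a B C) (h' B))"
    proof (rule sum.cong[OF refl])
      fix B assume "B \<in> ?T"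
      then have B: "B \<in> objs sa G R" using T by auto
      show "Fm B C (hom_of sa G a B C) ((h + h') B) = Fm B C (hom_of sa G a B C) (h B) + Fm B C (hom_of sa G a B C) (h' B)"
        using F_addv[OF B C hom_of_homset HF_val[OF h B] HF_val[OF h' B]] by simp
    qed
    then show ?thesis using e1 e2 e3 by (simp add: sum.distrib)
  qed
qed

lemma Hact_sar:
  assumes h: "h \<in> HF sa G R Fo"
  shows "Hact sa G R Fm a (\<lambda>B. sv c (h B)) = (\<lambda>B. sv c (Hact sa G R Fm a h B))"
proof
  fix C
  show "Hact sa G R Fm a (\<lambda>B. sv c (h B)) C = sv c (Hact sa G R Fm a h C)"
  proof (cases "C \<in> objs sa G R")
    case False
    then show ?thesis using Hact_out by simp
  next
    case C: True
    let ?T = "{B. h B \<noteq> 0}"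
    have hh: "(\<lambda>B. sv c (h B)) \<in> HF sa G R Fo" using HF_subspace h unfolding module.subspace_def[OF Fmod] by blast
    have T: "finite ?T" "?T \<subseteq> objs sa G R" using HF_supp[OF h] HF_supp_objs[OF h] by auto
    have e1: "Hact sa G R Fm a (\<lambda>B. sv c (h B)) C = (\<Sum>B\<in>?T. Fm B C (hom_of sa G a B C) (sv c (h B)))"
      by (rule Hact_T[OF hh T]) (auto simp: C)
    have e2: "Hact sa G R Fm a h C = (\<Sum>B\<in>?T. Fm B C (hom_of sa G a B C) (h B))"
      by (rule Hact_T[OF h T]) (auto simp: C)
    have "(\<Sum>B\<in>?T. Fm B C (hom_of sa G a B C) (sv c (h B))) = (\<Sum>B\<in>?T. sv c (Fm B C (hom_of sa G a B C) (h B)))"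
    proof (rule sum.cong[OF refl])
      fix B assume "B \<in> ?T"
      then have B: "B \<in> objs sa G R" using T by auto
      show "Fm B C (hom_of sa G a B C) (sv c (h B)) = sv c (Fm B C (hom_of sa G a B C) (h B))"
        using F_scalev[OF B C hom_of_homset HF_val[OF h B]] .
    qed
    then show ?thesis using e1 e2 by (simp add: VV.scale_sum_right)
  qed
qed

lemma Hact_mult:
  assumes h: "h \<in> HF sa G R Fo"
  shows "Hact sa G R Fm (a * b) h = Hact sa G R Fm a (Hact sa G R Fm b h)"
proof
  fix D
  show "Hact sa G R Fm (a * b) h D = Hact sa G R Fm a (Hact sa G R Fm b h) D"
  proof (cases "D \<in> objs sa G R")
    case False
    then show ?thesis using Hact_out by simp
  next
    case D: True
    let ?S = "{B. h B \<noteq> 0}"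
    let ?hb = "Hact sa G R Fm b h"
    let ?K = "{C. ?hb C \<noteq> 0} \<union> (\<Union>B\<in>?S. {C \<in> objs sa G R. Fm B C (hom_of sa G b B C) (h B) \<noteq> 0})"
    have S: "finite ?S" "?S \<subseteq> objs sa G R" using HF_supp[OF h] HF_supp_objs[OF h] by auto
    have hb: "?hb \<in> HF sa G R Fo" by (rule Hact_HF[OF h])
    have fu: "finite (\<Union>B\<in>?S. {C \<in> objs sa G R. Fm B C (hom_of sa G b B C) (h B) \<noteq> 0})"
    proof (rule finite_UN_I[OF S(1)])
      fix B assume "B \<in> ?S"
      then have Bo: "B \<in> objs sa G R" using S by auto
      show "finite {C \<in> objs sa G R. Fm B C (hom_of sa G b B C) (h B) \<noteq> 0}"
        by (rule FIN[OF Bo HF_val[OF h Bo]])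
    qed
    have K: "finite ?K" "?K \<subseteq> objs sa G R"
    proof -
      show "finite ?K" using HF_supp[OF hb] fu by (rule finite_UnI)
      show "?K \<subseteq> objs sa G R" using HF_supp_objs[OF hb] by blast
    qed
    have "Hact sa G R Fm (a * b) h D = (\<Sum>B\<in>?S. Fm B D (hom_of sa G (a * b) B D) (h B))"
      unfolding Hact_def using D by simp
    also have "\<dots> = (\<Sum>B\<in>?S. \<Sum>C\<in>?K. Fm C D (hom_of sa G a C D) (Fm B C (hom_of sa G b B C) (h B)))"
    proof (rule sum.cong[OF refl])
      fix B assume B: "B \<in> ?S"
      then have Bo: "B \<in> objs sa G R" using S by auto
      have "{C \<in> objs sa G R. Fm B C (hom_of sa G b B C) (h B) \<noteq> 0} \<subseteq> ?K" using B by blast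
      then show "Fm B D (hom_of sa G (a * b) B D) (h B)
          = (\<Sum>C\<in>?K. Fm C D (hom_of sa G a C D) (Fm B C (hom_of sa G b B C) (h B)))"
        using mult[OF Bo D HF_val[OF h Bo] K] by blast
    qed
    also have "\<dots> = (\<Sum>C\<in>?K. \<Sum>B\<in>?S. Fm C D (hom_of sa G a C D) (Fm B C (hom_of sa G b B C) (h B)))"
      by (rule sum.swap)
    also have "\<dots> = (\<Sum>C\<in>?K. Fm C D (hom_of sa G a C D) (?hb C))"
    proof (rule sum.cong[OF refl])
      fix C assume "C \<in> ?K"
      then have C: "C \<in> objs sa G R" using K by auto
      have "?hb C = (\<Sum>B\<in>?S. Fm B C (hom_of sa G b B C) (h B))" unfolding Hact_def using C by simp
      moreover have "Fm C D (hom_of sa G a C D) (\<Sum>B\<in>?S. Fm B C (hom_of sa G b B C) (h B))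
          = (\<Sum>B\<in>?S. Fm C D (hom_of sa G a C D) (Fm B C (hom_of sa G b B C) (h B)))"
      proof (rule Fm_sum[OF C D hom_of_homset])
        fix B assume "B \<in> ?S"
        then have Bo: "B \<in> objs sa G R" using S by auto
        show "Fm B C (hom_of sa G b B C) (h B) \<in> Fo C" by (rule phi_in[OF Bo C HF_val[OF h Bo]])
      qed
      ultimately show "(\<Sum>B\<in>?S. Fm C D (hom_of sa G a C D) (Fm B C (hom_of sa G b B C) (h B)))
          = Fm C D (hom_of sa G a C D) (?hb C)" by simp
    qed
    also have "\<dots> = Hact sa G R Fm a ?hb D"
      by (rule Hact_T[OF hb K _ D, symmetric]) blast
    finally show ?thesis .
  qed
qed

lemma left_module: "is_left_module sa (\<lambda>c h B. sv c (h B)) (HF sa G R Fo) (Hact sa G R Fm)"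
  unfolding is_left_module_def
  by (simp add: HF_subspace Hact_HF Hact_1 Hact_mult Hact_addl Hact_addr Hact_sal Hact_sar)

end

context amod begin

definition "dlt B w = (\<lambda>C. if C = B then w else 0)"

lemma dlt_HF: "B \<in> objs sa G R \<Longrightarrow> w \<in> Fo B \<Longrightarrow> dlt B w \<in> HF sa G R Fo"
proof (rule HF_I)
  assume B: "B \<in> objs sa G R" and w: "w \<in> Fo B"
  have "{C. dlt B w C \<noteq> 0} \<subseteq> {B}" unfolding dlt_def by auto
  then show "finite {C. dlt B w C \<noteq> 0}" by (rule finite_subset) simp
  fix C assume C: "C \<in> objs sa G R"
  show "dlt B w C \<in> Fo C" unfolding dlt_def using w VV.subspace_0[OF F_sub[OF C]] by auto
next
  fix C assume B: "B \<in> objs sa G R" and "C \<notin> objs sa G R"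
  then show "dlt B w C = 0" unfolding dlt_def by auto
qed

lemma Hact_dlt:
  assumes B: "B \<in> objs sa G R" and w: "w \<in> Fo B" and C: "C \<in> objs sa G R"
  shows "Hact sa G R Fm a (dlt B w) C = Fm B C (hom_of sa G a B C) w"
proof -
  have "Hact sa G R Fm a (dlt B w) C = (\<Sum>B'\<in>{B}. Fm B' C (hom_of sa G a B' C) (dlt B w B'))"
    by (rule Hact_T[OF dlt_HF[OF B w] _ _ _ C]) (auto simp: B dlt_def)
  then show ?thesis by (simp add: dlt_def)
qed

lemma dlt_part:
  assumes B: "B \<in> objs sa G R" and w: "w \<in> Fo B"
  shows "bpart sa G B (Hact sa G R Fm) {0} (dlt B w)"
proof -
  obtain m0 where m0: "m0 \<in> WB sa G B" and k: "\<And>x. x \<in> m0 \<Longrightarrow> Fm B B (hom_of sa G x B B) w = 0"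
    using kill[OF B w] by blast
  have "\<forall>x\<in>m0. Hact sa G R Fm x (dlt B w) \<in> {0}"
  proof
    fix x assume x: "x \<in> m0"
    have xG: "x \<in> G" using ts_G[OF W_ts[OF m0 B]] x by blast
    have "Hact sa G R Fm x (dlt B w) C = 0" for C
    proof (cases "C \<in> objs sa G R")
      case False
      then show ?thesis by (rule Hact_out)
    next
      case C: True
      show ?thesis
      proof (cases "C = B")
        case True
        then show ?thesis using Hact_dlt[OF B w C] k[OF x] by simp
      next
        case False
        then show ?thesis using Hact_dlt[OF B w C] offphi[OF B C _ xG w] by simp
      qed
    qed
    then show "Hact sa G R Fm x (dlt B w) \<in> {0}" by auto
  qed
  then show ?thesis unfolding bpart_def using m0 by blast
qed

lemma bpart_supp:
  assumes B: "B \<in> objs sa G R" and h: "h \<in> HF sa G R Fo"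
    and p: "bpart sa G B (Hact sa G R Fm) {0} h" and ne: "C \<noteq> B"
  shows "h C = 0"
proof (cases "C \<in> objs sa G R")
  case False
  then show ?thesis using HF_out[OF h] by simp
next
  case C: True
  obtain m where m: "m \<in> WB sa G B" and hm: "\<forall>x\<in>m. Hact sa G R Fm x h \<in> {0}"
    using p unfolding bpart_def by blast
  have hC: "h C \<in> Fo C" using HF_val[OF h C] .
  obtain m1 n1 where m1: "m1 \<in> WB sa G C" and n1: "n1 \<in> WB sa G C"
    and z: "\<And>x. x \<in> Jid sa m1 n1 \<Longrightarrow> Fm C C (hom_of sa G x C C) (h C) = 0"
    using cont0[OF C C hC] by blast
  obtain u w where uw: "u \<in> m" "w \<in> m1" "u + w = 1"
    using W_comax[OF B C ne[symmetric] m m1] unfolding comax_def by blast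
  have uG: "u \<in> G" using ts_G[OF W_ts[OF m B]] uw(1) by blast
  let ?S = "{B. h B \<noteq> 0}"
  let ?T = "insert C ?S"
  have T: "finite ?T" "?T \<subseteq> objs sa G R" "?S \<subseteq> ?T" using HF_supp[OF h] HF_supp_objs[OF h] C by auto
  have "Hact sa G R Fm u h C = (\<Sum>B'\<in>?T. Fm B' C (hom_of sa G u B' C) (h B'))"
    by (rule Hact_T[OF h T C])
  also have "\<dots> = Fm C C (hom_of sa G u C C) (h C) + (\<Sum>B'\<in>?T - {C}. Fm B' C (hom_of sa G u B' C) (h B'))"
    by (rule sum.remove[OF T(1)]) simp
  also have "(\<Sum>B'\<in>?T - {C}. Fm B' C (hom_of sa G u B' C) (h B')) = 0"
  proof (rule sum.neutral, rule ballI)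
    fix B' assume "B' \<in> ?T - {C}"
    then have "B' \<in> objs sa G R" "B' \<noteq> C" using T by auto
    then show "Fm B' C (hom_of sa G u B' C) (h B') = 0" using offphi[OF _ C _ uG] HF_val[OF h] by blast
  qed
  finally have "Fm C C (hom_of sa G u C C) (h C) = Hact sa G R Fm u h C" by simp
  also have "\<dots> = 0" using hm uw(1) by auto
  finally have u0: "Fm C C (hom_of sa G u C C) (h C) = 0" .
  have "w \<in> Jid sa m1 n1" using mem_lid[OF uw(2)] lid_J by blast
  then have w0: "Fm C C (hom_of sa G w C C) (h C) = 0" by (rule z)
  have "h C = Fm C C (hom_of sa G 1 C C) (h C)" using F_id[OF C hC] by simp
  also have "\<dots> = Fm C C (hom_of sa G (u + w) C C) (h C)" using uw(3) by simp
  also have "\<dots> = 0" using phi_add[OF C C hC] u0 w0 by simp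
  finally show ?thesis .
qed

lemma block: "block_module sa G R (HF sa G R Fo) {0} (Hact sa G R Fm)"
  unfolding block_module_def
proof (intro conjI ballI allI impI)
  fix h assume h: "h \<in> HF sa G R Fo"
  let ?S = "{B. h B \<noteq> 0}"
  let ?f = "\<lambda>B. dlt B (h B)"
  have S: "finite ?S" "?S \<subseteq> objs sa G R" using HF_supp[OF h] HF_supp_objs[OF h] by auto
  have parts: "\<forall>B\<in>?S. ?f B \<in> HF sa G R Fo \<and> bpart sa G B (Hact sa G R Fm) {0} (?f B)"
    using S(2) dlt_HF dlt_part HF_val[OF h] by blast
  have "(\<Sum>B\<in>?S. ?f B) = h"
  proof
    fix C
    have "(\<Sum>B\<in>?S. ?f B) C = (\<Sum>B\<in>?S. ?f B C)" by (rule sum_fun_apply)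
    also have "\<dots> = (\<Sum>B\<in>?S. if C = B then h B else 0)" unfolding dlt_def by simp
    also have "\<dots> = (if C \<in> ?S then h C else 0)" using S(1) by (simp add: sum.delta)
    also have "\<dots> = h C" by auto
    finally show "(\<Sum>B\<in>?S. ?f B) C = h C" .
  qed
  then have "h - (\<Sum>B\<in>?S. ?f B) \<in> {0}" by simp
  then show "\<exists>S f. finite S \<and> S \<subseteq> objs sa G R \<and>
        (\<forall>B\<in>S. f B \<in> HF sa G R Fo \<and> bpart sa G B (Hact sa G R Fm) {0} (f B)) \<and>
        h - (\<Sum>B\<in>S. f B) \<in> {0}"
    using S parts by (intro exI[of _ ?S] exI[of _ ?f]) blast
next
  fix S f assume a: "finite S \<and> S \<subseteq> objs sa G R \<and>
        (\<forall>B\<in>S. f B \<in> HF sa G R Fo \<and> bpart sa G B (Hact sa G R Fm) {0} (f B)) \<and> (\<Sum>B\<in>S. f B) \<in> {0}"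
  then have S: "finite S" "S \<subseteq> objs sa G R" and fb: "\<forall>B\<in>S. f B \<in> HF sa G R Fo \<and> bpart sa G B (Hact sa G R Fm) {0} (f B)"
    and s0: "(\<Sum>B\<in>S. f B) = 0" by auto
  have off: "f B C = 0" if "B \<in> S" "C \<noteq> B" for B C
    using bpart_supp[of B "f B" C] that fb S(2) by blast
  fix B assume B: "B \<in> S"
  have "f B = 0"
  proof
    fix C
    show "f B C = 0 C"
    proof (cases "C = B")
      case False
      then show ?thesis using off[OF B] by simp
    next
      case True
      have "0 = (\<Sum>B'\<in>S. f B') C" using s0 by simp
      also have "\<dots> = (\<Sum>B'\<in>S. f B' C)" by (rule sum_fun_apply)
      also have "\<dots> = f C C + (\<Sum>B'\<in>S - {C}. f B' C)" using B True by (simp add: sum.remove[OF S(1)])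
      also have "(\<Sum>B'\<in>S - {C}. f B' C) = 0" using off by (intro sum.neutral) auto
      finally show ?thesis using True by simp
    qed
  qed
  then show "f B \<in> {0}" by simp
qed

lemma strong_disc:
  assumes d: "discrete_Amodule sa G R sv Fo Fm"
  shows "strong_block_module sa G R (HF sa G R Fo) {0} (Hact sa G R Fm)"
  unfolding strong_block_module_def
proof (intro conjI block ballI)
  fix B assume B: "B \<in> objs sa G R"
  have "\<exists>I. finite I \<and> I \<subseteq> WB sa G B \<times> WB sa G B \<and>
           (\<forall>\<beta>\<in>homset sa G B B. (\<forall>(m, n)\<in>I. \<beta> m n = hom_of sa G 0 B B m n) \<longrightarrow>
              (\<forall>v\<in>Fo B. Fm B B \<beta> v = Fm B B (hom_of sa G 0 B B) v))"
  proof -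
    have "\<forall>B\<in>objs sa G R. \<forall>C\<in>objs sa G R. \<forall>\<alpha>\<in>homset sa G B C.
        (\<exists>I. finite I \<and> I \<subseteq> WB sa G B \<times> WB sa G C \<and>
           (\<forall>\<beta>\<in>homset sa G B C. (\<forall>(m, n)\<in>I. \<beta> m n = \<alpha> m n) \<longrightarrow>
              (\<forall>v\<in>Fo B. Fm B C \<beta> v = Fm B C \<alpha> v)))"
      using d unfolding discrete_Amodule_def by (rule conjunct2)
    note h1 = bspec[OF this B]
    note h2 = bspec[OF h1 B]
    note h3 = bspec[OF h2 hom_of_homset[of 0 B B]]
    show ?thesis by (rule h3)
  qed
  then obtain I where I: "finite I" "I \<subseteq> WB sa G B \<times> WB sa G B"
    "\<forall>\<beta>\<in>homset sa G B B. (\<forall>(m, n)\<in>I. \<beta> m n = hom_of sa G 0 B B m n) \<longrightarrow>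
              (\<forall>v\<in>Fo B. Fm B B \<beta> v = Fm B B (hom_of sa G 0 B B) v)" by (elim exE conjE) (intro that)
  have fI: "finite (fst ` I \<union> snd ` I)" "fst ` I \<union> snd ` I \<subseteq> WB sa G B" using I by auto
  obtain m where m: "m \<in> WB sa G B" "\<forall>y\<in>fst ` I \<union> snd ` I. m \<subseteq> y"
    using W_lb_fin[OF fI B] by blast
  have kx: "Fm B B (hom_of sa G x B B) w = 0" if x: "x \<in> m" and w: "w \<in> Fo B" for x w
  proof -
    have "\<forall>(mi, ni)\<in>I. hom_of sa G x B B mi ni = hom_of sa G 0 B B mi ni"
    proof (clarify)
      fix mi ni assume i: "(mi, ni) \<in> I"
      then have mi: "mi \<in> WB sa G B" and ni: "ni \<in> WB sa G B" using I(2) by auto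
      have "mi \<in> fst ` I" using i by (metis fst_conv image_eqI)
      then have "mi \<in> fst ` I \<union> snd ` I" by (rule UnI1)
      then have "m \<subseteq> mi" using m(2) by (rule bspec[rotated])
      then have "x \<in> mi" using x by (rule subsetD)
      then have "x \<in> lid sa mi" by (rule mem_lid)
      then have "x \<in> Jid sa mi ni" using lid_J by (rule subsetD[rotated])
      then have "x - 0 \<in> Jid sa mi ni" by simp
      then have "coset (Jid sa mi ni) x = coset (Jid sa mi ni) 0" using coset_eq_iff[OF Jid_sub] by blast
      then show "hom_of sa G x B B mi ni = hom_of sa G 0 B B mi ni"
        using hom_of_W[OF mi ni] by simp
    qed
    then have "\<forall>v\<in>Fo B. Fm B B (hom_of sa G x B B) v = Fm B B (hom_of sa G 0 B B) v"
      using bspec[OF I(3) hom_of_homset[of x B B]] by (rule mp[rotated])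
    then have "Fm B B (hom_of sa G x B B) w = Fm B B (hom_of sa G 0 B B) w"
      using w by (rule bspec)
    then show ?thesis using phi_0[OF B B w] by simp
  qed
  show "\<exists>m\<in>WB sa G B. \<forall>v\<in>HF sa G R Fo. bpart sa G B (Hact sa G R Fm) {0} v \<longrightarrow>
          (\<forall>x\<in>m. Hact sa G R Fm x v \<in> {0})"
  proof (intro bexI[OF _ m(1)] ballI impI)
    fix h x assume h: "h \<in> HF sa G R Fo" and p: "bpart sa G B (Hact sa G R Fm) {0} h" and x: "x \<in> m"
    have xG: "x \<in> G" using ts_G[OF W_ts[OF m(1) B]] x by blast
    have supp: "{B'. h B' \<noteq> 0} \<subseteq> {B}"
    proof
      fix B' assume "B' \<in> {B'. h B' \<noteq> 0}"
      then show "B' \<in> {B}" using bpart_supp[OF B h p, of B'] by auto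
    qed
    have "Hact sa G R Fm x h C = 0" for C
    proof (cases "C \<in> objs sa G R")
      case False
      then show ?thesis by (rule Hact_out)
    next
      case C: True
      have "Hact sa G R Fm x h C = (\<Sum>B'\<in>{B}. Fm B' C (hom_of sa G x B' C) (h B'))"
        by (rule Hact_T[OF h _ _ supp C]) (auto simp: B)
      then have e: "Hact sa G R Fm x h C = Fm B C (hom_of sa G x B C) (h B)" by simp
      show ?thesis
      proof (cases "C = B")
        case True
        then show ?thesis using e kx[OF x HF_val[OF h B]] by simp
      next
        case False
        then show ?thesis using e offphi[OF B C _ xG HF_val[OF h B]] by simp
      qed
    qed
    then show "Hact sa G R Fm x h \<in> {0}" by auto
  qed
qed

lemma main:
  "(\<forall>a B v. B \<in> objs sa G R \<longrightarrow> v \<in> Fo B \<longrightarrow>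
            finite {C \<in> objs sa G R. Fm B C (hom_of sa G a B C) v \<noteq> 0})
       \<and> is_left_module sa (\<lambda>c h B. sv c (h B)) (HF sa G R Fo) (Hact sa G R Fm)
       \<and> block_module sa G R (HF sa G R Fo) {0} (Hact sa G R Fm)
       \<and> (discrete_Amodule sa G R sv Fo Fm \<longrightarrow>
            strong_block_module sa G R (HF sa G R Fo) {0} (Hact sa G R Fm))"
proof (intro conjI allI impI)
  fix a B v assume "B \<in> objs sa G R" "v \<in> Fo B"
  then show "finite {C \<in> objs sa G R. Fm B C (hom_of sa G a B C) v \<noteq> 0}" by (rule FIN)
next
  show "is_left_module sa (\<lambda>c h B. sv c (h B)) (HF sa G R Fo) (Hact sa G R Fm)" by (rule left_module)
next
  show "block_module sa G R (HF sa G R Fo) {0} (Hact sa G R Fm)" by (rule block)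
next
  assume "discrete_Amodule sa G R sv Fo Fm"
  then show "strong_block_module sa G R (HF sa G R Fo) {0} (Hact sa G R Fm)" by (rule strong_disc)
qed

end

theorem mainTheorem13:
  fixes sa :: "'k::field \<Rightarrow> 'a::ring_1 \<Rightarrow> 'a"
    and G :: "'a set"
    and R :: "('a set \<times> 'a set) set"
    and sv :: "'k \<Rightarrow> 'v::ab_group_add \<Rightarrow> 'v"
    and Fo :: "'a set set \<Rightarrow> 'v set"
    and Fm :: "'a set set \<Rightarrow> 'a set set \<Rightarrow> 'a hom \<Rightarrow> 'v \<Rightarrow> 'v"
  assumes "kalg sa" and "subalg sa G"
    and "equiv (cfs sa G) R"
    and "strong_HC_block_subalg sa G R"
    and "vector_space sv"
    and "profinite_Amodule sa G R sv Fo Fm"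
  shows "(\<forall>a B v. B \<in> objs sa G R \<longrightarrow> v \<in> Fo B \<longrightarrow>
            finite {C \<in> objs sa G R. Fm B C (hom_of sa G a B C) v \<noteq> 0})
       \<and> is_left_module sa (\<lambda>c h B. sv c (h B)) (HF sa G R Fo) (Hact sa G R Fm)
       \<and> block_module sa G R (HF sa G R Fo) {0} (Hact sa G R Fm)
       \<and> (discrete_Amodule sa G R sv Fo Fm \<longrightarrow>
            strong_block_module sa G R (HF sa G R Fo) {0} (Hact sa G R Fm))"
proof -
  interpret A: amod sa G R sv Fo Fm
    by (rule amod.intro[OF hcb.intro amod_axioms.intro]) (fact assms)+
  show ?thesis by (rule A.main)
qed

end
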